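(* Let $\mathcal A$ be a finite set, $\mathcal R\subset F(\mathcal A)$ finite, $\phi:F(\mathcal A)\to F(\mathcal A)$ a homomorphism, $G$ the group with presentation $\mathcal P=\langle t,\mathcal A:\mathcal R,\ t^{-1}at=\phi(a)\ (a\in\mathcal A)\rangle$, $X$ its Cayley 2-complex, and $\Lambda\subset X$ the Cayley graph of $A=\langle\mathcal A\rangle\le G$ with respect to $\mathcal A$. Let $s=(s_0,s_1,\dots)$ be a proper edge path ray in $\Lambda$ with initial vertex $v$, and let $r_v$ be the edge path ray at $v$ each of whose edges is labeled $t$. Define $H_s:[0,\infty)\times[0,\infty)\to X$ by $H_s(n+x,y)=H_{s_n}(x,y)$ for integers $n\ge0$ and $(x,y)\in[0,1]\times[0,\infty)$, where $H_{s_n}$ is the strip map of the edge $s_n$ described in the context. Then $H_s$ is a proper homotopy of $s$ to $r_v$ rel $\{v\}$.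
   Context: The Cayley 2-complex $X$ of $\mathcal P$ is the simply connected 2-complex whose 1-skeleton is the Cayley graph of $G$ with respect to $\mathcal A\cup\{t\}$ (vertex set $G$), with a 2-cell at each vertex for each relator. $\Lambda$ is the subgraph with vertex set $A$ and the $\mathcal A$-labeled edges between them. Strip map: for an edge $e$ (traversed from $v'$ to $w'$) with label $a\in\mathcal A^{\pm1}$ and each integer $k\ge0$, the edge path at $v't^k$ reading the word $\phi^k(a)$ ends at $w't^k$; the conjugation 2-cells attached along its edges form a strip bounded by this path, the $t$-edges at $v't^k$ and $w't^k$, and the path labeled $\phi^{k+1}(a)$ at $v't^{k+1}$. $H_e:[0,1]\times[0,\infty)\to X$ maps $[0,1]\times[k,k+1]$ onto this strip with $[0,1]\times\{k\}$ to the path labeled $\phi^k(a)$ and $\{0\}\times[k,k+1]$, $\{1\}\times[k,k+1]$ to the $t$-edges at $v't^k$, $w't^k$. Edge path rays are parametrized so that the $i$-th edge is traversed on $[i-1,i]$. *)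

theory Defs
  imports "HOL-Analysis.Analysis"
begin

text \<open>A letter is a generator together with an inversion flag (True = inverse).
  Generators are Some a for a in the generating set, and None stands for t.\<close>
type_synonym 'a letter = "'a option \<times> bool"
type_synonym 'a word = "'a letter list"

definition inv_letter :: "'a letter \<Rightarrow> 'a letter" where
  "inv_letter l = (fst l, \<not> snd l)"

definition inv_word :: "'a word \<Rightarrow> 'a word" where
  "inv_word w = rev (map inv_letter w)"

definition reduced :: "'a word \<Rightarrow> bool" where
  "reduced w \<longleftrightarrow> (\<forall>i. Suc i < length w \<longrightarrow> w ! Suc i \<noteq> inv_letter (w ! i))"

fun free_red :: "'a word \<Rightarrow> 'a word" where
  "free_red [] = []"
| "free_red (l # w) = (case free_red w of [] \<Rightarrow> [l]
      | (m # u) \<Rightarrow> (if m = inv_letter l then u else l # m # u))"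

text \<open>Words (elements of the free group F(A), as reduced words) over the generating set A.\<close>
definition A_word :: "'a set \<Rightarrow> 'a word \<Rightarrow> bool" where
  "A_word \<A> w \<longleftrightarrow> reduced w \<and> (\<forall>l\<in>set w. fst l \<in> Some ` \<A>)"

definition phi_letter :: "('a \<Rightarrow> 'a word) \<Rightarrow> 'a letter \<Rightarrow> 'a word" where
  "phi_letter \<phi> l = (case fst l of
      Some a \<Rightarrow> (if snd l then inv_word (\<phi> a) else \<phi> a)
    | None \<Rightarrow> [l])"

definition phi_word :: "('a \<Rightarrow> 'a word) \<Rightarrow> 'a word \<Rightarrow> 'a word" where
  "phi_word \<phi> w = free_red (concat (map (phi_letter \<phi>) w))"

definition phi_pow :: "('a \<Rightarrow> 'a word) \<Rightarrow> nat \<Rightarrow> 'a word \<Rightarrow> 'a word" where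
  "phi_pow \<phi> k w = (phi_word \<phi> ^^ k) w"

definition tpow :: "nat \<Rightarrow> 'a word" where
  "tpow k = replicate k (None, False)"

definition conj_rel :: "('a \<Rightarrow> 'a word) \<Rightarrow> 'a \<Rightarrow> 'a word" where
  "conj_rel \<phi> a = [(None, True), (Some a, False), (None, False)] @ inv_word (\<phi> a)"

definition rels :: "'a set \<Rightarrow> 'a word set \<Rightarrow> ('a \<Rightarrow> 'a word) \<Rightarrow> 'a word set" where
  "rels \<A> R \<phi> = R \<union> conj_rel \<phi> ` \<A>"

definition gens :: "'a set \<Rightarrow> 'a option set" where
  "gens \<A> = insert None (Some ` \<A>)"

inductive peq :: "'a word set \<Rightarrow> 'a word \<Rightarrow> 'a word \<Rightarrow> bool" for Rl where
  refl: "peq Rl w w"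
| sym: "peq Rl u w \<Longrightarrow> peq Rl w u"
| trans: "peq Rl u v \<Longrightarrow> peq Rl v w \<Longrightarrow> peq Rl u w"
| free: "peq Rl (u @ [l, inv_letter l] @ w) (u @ w)"
| rel: "r \<in> Rl \<Longrightarrow> peq Rl (u @ r @ w) (u @ w)"

text \<open>Group elements are equivalence classes of words.\<close>
type_synonym 'a grp = "'a word set"

definition vcls :: "'a word set \<Rightarrow> 'a word \<Rightarrow> 'a grp" where
  "vcls Rl w = {w'. peq Rl w w'}"

definition grp_carrier :: "'a set \<Rightarrow> 'a word set \<Rightarrow> 'a grp set" where
  "grp_carrier \<A> Rl = {vcls Rl w | w. \<forall>l\<in>set w. fst l \<in> gens \<A>}"

definition subgrp_A :: "'a set \<Rightarrow> 'a word set \<Rightarrow> 'a grp set" where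
  "subgrp_A \<A> Rl = {vcls Rl w | w. \<forall>l\<in>set w. fst l \<in> Some ` \<A>}"

definition gmulw :: "'a word set \<Rightarrow> 'a grp \<Rightarrow> 'a word \<Rightarrow> 'a grp" where
  "gmulw Rl g u = vcls Rl ((SOME w. w \<in> g) @ u)"

definition gmul :: "'a word set \<Rightarrow> 'a grp \<Rightarrow> 'a letter \<Rightarrow> 'a grp" where
  "gmul Rl g l = gmulw Rl g [l]"

text \<open>Points of the disjoint union of cells: vertices, edges (g,x) from g to gx
  parametrised by [0,1], and 2-cells (g,r) parametrised by the closed unit disc.\<close>
datatype ('v, 'l, 'r) cpt = Vtx 'v | Edg 'v 'l real | Cel 'v 'r complex

type_synonym 'a xpt = "('a grp, 'a option, 'a word) cpt"

text \<open>Boundary parameter in [0,1) of a point on the unit circle.\<close>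
definition bparam :: "complex \<Rightarrow> real" where
  "bparam z = (if Arg z < 0 then Arg z + 2 * pi else Arg z) / (2 * pi)"

definition canon_edge :: "'a word set \<Rightarrow> 'a grp \<Rightarrow> 'a option \<Rightarrow> real \<Rightarrow> 'a xpt" where
  "canon_edge Rl g x s =
     (if s = 0 then Vtx g else if s = 1 then Vtx (gmul Rl g (x, False)) else Edg g x s)"

text \<open>Point at parameter s of the oriented edge starting at u and reading letter l.\<close>
definition oe_pt :: "'a word set \<Rightarrow> 'a grp \<times> 'a letter \<Rightarrow> real \<Rightarrow> 'a xpt" where
  "oe_pt Rl e s = (let u = fst e; l = snd e in
     if snd l then canon_edge Rl (gmul Rl u l) (fst l) (1 - s)
     else canon_edge Rl u (fst l) s)"

text \<open>Attaching map of the 2-cell at g for relator r: the boundary circle is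
  divided into length r arcs, the j-th traversing the j-th edge of the path reading r from g.\<close>
definition attach :: "'a word set \<Rightarrow> 'a grp \<Rightarrow> 'a word \<Rightarrow> real \<Rightarrow> 'a xpt" where
  "attach Rl g r \<theta> =
     (if r = [] then Vtx g else
      (let n = length r; j = nat \<lfloor>real n * \<theta>\<rfloor>; s = real n * \<theta> - real j in
        oe_pt Rl (gmulw Rl g (take j r), r ! j) s))"

text \<open>Canonical representative of the identification class of a point.\<close>
fun canon :: "'a word set \<Rightarrow> 'a xpt \<Rightarrow> 'a xpt" where
  "canon Rl (Vtx g) = Vtx g"
| "canon Rl (Edg g x s) = canon_edge Rl g x s"
| "canon Rl (Cel g r z) = (if norm z = 1 then attach Rl g r (bparam z) else Cel g r z)"

definition cells_carrier :: "'a set \<Rightarrow> 'a word set \<Rightarrow> 'a xpt set" where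
  "cells_carrier \<A> Rl =
     {Vtx g | g. g \<in> grp_carrier \<A> Rl}
   \<union> {Edg g x s | g x s. g \<in> grp_carrier \<A> Rl \<and> x \<in> gens \<A> \<and> 0 \<le> s \<and> s \<le> 1}
   \<union> {Cel g r z | g r z. g \<in> grp_carrier \<A> Rl \<and> r \<in> Rl \<and> norm z \<le> 1}"

text \<open>Quotient (CW) topology of the Cayley 2-complex.\<close>
definition cayley_top :: "'a set \<Rightarrow> 'a word set \<Rightarrow> 'a xpt topology" where
  "cayley_top \<A> Rl = topology (\<lambda>U. U \<subseteq> canon Rl ` cells_carrier \<A> Rl \<and>
     (\<forall>g\<in>grp_carrier \<A> Rl. \<forall>x\<in>gens \<A>.
        openin (top_of_set {0..1}) {s \<in> {0..1}. canon Rl (Edg g x s) \<in> U}) \<and>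
     (\<forall>g\<in>grp_carrier \<A> Rl. \<forall>r\<in>Rl.
        openin (top_of_set (cball 0 1)) {z \<in> cball 0 1. canon Rl (Cel g r z) \<in> U}))"

text \<open>Edge path ray given by oriented edges (start vertex, letter), parametrised so that
  the n-th edge (n from 0) is traversed on [n, n+1].\<close>
definition ray_map :: "'a word set \<Rightarrow> (nat \<Rightarrow> 'a grp \<times> 'a letter) \<Rightarrow> real \<Rightarrow> 'a xpt" where
  "ray_map Rl s y = oe_pt Rl (s (nat \<lfloor>y\<rfloor>)) (y - of_int \<lfloor>y\<rfloor>)"

definition edge_path_ray_in_Lambda ::
  "'a set \<Rightarrow> 'a word set \<Rightarrow> (nat \<Rightarrow> 'a grp \<times> 'a letter) \<Rightarrow> bool" where
  "edge_path_ray_in_Lambda \<A> Rl s \<longleftrightarrow>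
     (\<forall>n. fst (s n) \<in> subgrp_A \<A> Rl \<and> fst (snd (s n)) \<in> Some ` \<A> \<and>
          fst (s (Suc n)) = gmul Rl (fst (s n)) (snd (s n)))"

definition proper_ray :: "'a set \<Rightarrow> 'a word set \<Rightarrow> (nat \<Rightarrow> 'a grp \<times> 'a letter) \<Rightarrow> bool" where
  "proper_ray \<A> Rl s \<longleftrightarrow>
     (\<forall>K. compactin (cayley_top \<A> Rl) K \<longrightarrow>
        compactin (top_of_set {0..}) {y \<in> {0::real..}. ray_map Rl s y \<in> K})"

definition t_ray :: "'a word set \<Rightarrow> 'a grp \<Rightarrow> nat \<Rightarrow> 'a grp \<times> 'a letter" where
  "t_ray Rl v n = (gmulw Rl v (tpow n), (None, False))"

definition word_path :: "'a word set \<Rightarrow> 'a grp \<Rightarrow> 'a word \<Rightarrow> real \<Rightarrow> 'a xpt" where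
  "word_path Rl u w x =
     (if w = [] then Vtx u else
      (let n = length w; j = min (nat \<lfloor>real n * x\<rfloor>) (n - 1) in
        oe_pt Rl (gmulw Rl u (take j w), w ! j) (real n * x - real j)))"

definition closed_cell :: "'a word set \<Rightarrow> 'a grp \<Rightarrow> 'a word \<Rightarrow> 'a xpt set" where
  "closed_cell Rl g r = canon Rl ` {Cel g r z | z. norm z \<le> 1}"

text \<open>The strip of the oriented edge (v', l) at level k: the conjugation 2-cells attached
  along the edges of the path reading phi^k(l) at v' t^k, together with its boundary.\<close>
definition strip :: "'a word set \<Rightarrow> ('a \<Rightarrow> 'a word) \<Rightarrow> 'a grp \<times> 'a letter \<Rightarrow> nat \<Rightarrow> 'a xpt set" where
  "strip Rl \<phi> e k =
    (let v' = fst e; l = snd e; w' = gmul Rl v' l;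
         u0 = gmulw Rl v' (tpow k); w = phi_pow \<phi> k [l] in
      (\<Union>j<length w.
         let m = w ! j; uj = gmulw Rl u0 (take j w);
             base = (if snd m then gmul Rl uj m else uj) in
           closed_cell Rl (gmul Rl base (None, False)) (conj_rel \<phi> (the (fst m))))
      \<union> (\<lambda>y. oe_pt Rl (u0, (None, False)) y) ` {0..1}
      \<union> (\<lambda>y. oe_pt Rl (gmulw Rl w' (tpow k), (None, False)) y) ` {0..1}
      \<union> word_path Rl u0 w ` {0..1}
      \<union> word_path Rl (gmulw Rl v' (tpow (Suc k))) (phi_pow \<phi> (Suc k) [l]) ` {0..1})"

definition is_strip_map ::
  "'a set \<Rightarrow> 'a word set \<Rightarrow> ('a \<Rightarrow> 'a word) \<Rightarrow> 'a grp \<times> 'a letter \<Rightarrow> (real \<times> real \<Rightarrow> 'a xpt) \<Rightarrow> bool" where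
  "is_strip_map \<A> Rl \<phi> e H \<longleftrightarrow>
    (let v' = fst e; l = snd e; w' = gmul Rl v' l in
     continuous_map (top_of_set ({0..1} \<times> {0..})) (cayley_top \<A> Rl) H \<and>
     (\<forall>k::nat. \<forall>x\<in>{0..1}.
        H (x, real k) = word_path Rl (gmulw Rl v' (tpow k)) (phi_pow \<phi> k [l]) x) \<and>
     (\<forall>k::nat. \<forall>y\<in>{real k..real k + 1}.
        H (0, y) = oe_pt Rl (gmulw Rl v' (tpow k), (None, False)) (y - real k) \<and>
        H (1, y) = oe_pt Rl (gmulw Rl w' (tpow k), (None, False)) (y - real k)) \<and>
     (\<forall>k::nat. H ` ({0..1} \<times> {real k..real k + 1}) = strip Rl \<phi> e k))"

definition Hs :: "(nat \<Rightarrow> 'a grp \<times> 'a letter) \<Rightarrow> ('a grp \<times> 'a letter \<Rightarrow> real \<times> real \<Rightarrow> 'a xpt)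
    \<Rightarrow> real \<times> real \<Rightarrow> 'a xpt" where
  "Hs s H p = H (s (nat \<lfloor>fst p\<rfloor>)) (fst p - of_int \<lfloor>fst p\<rfloor>, snd p)"

end

theory Submission
  imports Defs
begin


lemma peq_app_right: "peq Rl u v \<Longrightarrow> peq Rl (u @ x) (v @ x)"
proof (induction rule: peq.induct)
  case (free u l w) then show ?case using peq.free[of Rl u l "w @ x"] by simp
next
  case (rel r u w) then show ?case using peq.rel[of r Rl u "w @ x"] by simp
qed (auto intro: peq.intros)

lemma peq_app_left: "peq Rl u v \<Longrightarrow> peq Rl (x @ u) (x @ v)"
proof (induction rule: peq.induct)
  case (free u l w) then show ?case using peq.free[of Rl "x @ u" l w] by simp
next
  case (rel r u w) then show ?case using peq.rel[of r Rl "x @ u" w] by simp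
qed (auto intro: peq.intros)

lemma vcls_eq_iff: "vcls Rl u = vcls Rl w \<longleftrightarrow> peq Rl u w"
  unfolding vcls_def by (auto intro: peq.intros)

lemma mem_vcls: "w \<in> vcls Rl w"
  by (simp add: vcls_def peq.refl)

lemma gmulw_vcls: "gmulw Rl (vcls Rl w) u = vcls Rl (w @ u)"
proof -
  have "(SOME w'. w' \<in> vcls Rl w) \<in> vcls Rl w" by (rule someI, rule mem_vcls)
  then have "peq Rl w (SOME w'. w' \<in> vcls Rl w)" by (simp add: vcls_def)
  then have "peq Rl ((SOME w'. w' \<in> vcls Rl w) @ u) (w @ u)"
    by (rule peq_app_right[OF peq.sym])
  then show ?thesis unfolding gmulw_def by (simp add: vcls_eq_iff)
qed

lemma gmul_vcls: "gmul Rl (vcls Rl w) l = vcls Rl (w @ [l])"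
  by (simp add: gmul_def gmulw_vcls)

lemma peq_cancel_letter: "peq Rl (w @ [l, inv_letter l]) w"
  using peq.free[of Rl w l "[]"] by simp

lemma peq_cancel_word: "peq Rl (w @ u @ inv_word u) w"
proof (induction u arbitrary: w rule: rev_induct)
  case Nil then show ?case by (simp add: inv_word_def peq.refl)
next
  case (snoc l u)
  have "w @ (u @ [l]) @ inv_word (u @ [l]) = (w @ u) @ [l, inv_letter l] @ inv_word u"
    by (simp add: inv_word_def)
  moreover have "peq Rl ((w @ u) @ [l, inv_letter l] @ inv_word u) ((w @ u) @ inv_word u)"
    by (rule peq.free)
  ultimately have "peq Rl (w @ (u @ [l]) @ inv_word (u @ [l])) (w @ u @ inv_word u)" by simp
  then show ?case using snoc.IH peq.trans by blast
qed

lemma peq_rel_tail: "r \<in> Rl \<Longrightarrow> peq Rl (w @ r) w"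
  using peq.rel[of r Rl w "[]"] by simp

lemma gmulw_Nil: "gmulw Rl (vcls Rl w) [] = vcls Rl w"
  by (simp add: gmulw_vcls)

lemma gmulw_gmulw: "gmulw Rl (gmulw Rl (vcls Rl w) u) x = gmulw Rl (vcls Rl w) (u @ x)"
  by (simp add: gmulw_vcls)

lemma gmul_gmulw: "gmul Rl (gmulw Rl (vcls Rl w) u) l = gmulw Rl (vcls Rl w) (u @ [l])"
  by (simp add: gmulw_vcls gmul_vcls)

lemma gmulw_inv: "gmulw Rl (gmulw Rl (vcls Rl w) u) (inv_word u) = vcls Rl w"
  by (simp add: gmulw_vcls vcls_eq_iff peq_cancel_word)

lemma gmul_back: "gmul Rl (gmul Rl (vcls Rl w) l) (inv_letter l) = vcls Rl w"
  by (simp add: gmul_vcls vcls_eq_iff peq_cancel_letter)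

definition tdeg :: "'a word \<Rightarrow> int" where
  "tdeg w = sum_list (map (\<lambda>l. if fst l = None then (if snd l then -1 else 1) else 0) w)"

lemma tdeg_Nil[simp]: "tdeg [] = 0" and tdeg_Cons[simp]: "tdeg (l # w) = (if fst l = None then (if snd l then -1 else 1) else 0) + tdeg w"
  and tdeg_append[simp]: "tdeg (u @ w) = tdeg u + tdeg w"
  by (simp_all add: tdeg_def)

lemma tdeg_inv_word[simp]: "tdeg (inv_word w) = - tdeg w"
  by (induction w) (auto simp: inv_word_def inv_letter_def)

lemma tdeg_noNone: "\<forall>l\<in>set w. fst l \<noteq> None \<Longrightarrow> tdeg w = 0"
  by (induction w) auto

lemma peq_tdeg: "peq Rl u w \<Longrightarrow> \<forall>r\<in>Rl. tdeg r = 0 \<Longrightarrow> tdeg u = tdeg w"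
  by (induction rule: peq.induct) (auto simp: inv_letter_def)

definition tdegg :: "'a word set \<Rightarrow> 'a grp \<Rightarrow> int" where
  "tdegg Rl g = tdeg (SOME w. w \<in> g)"

lemma tdegg_vcls: "\<forall>r\<in>Rl. tdeg r = 0 \<Longrightarrow> tdegg Rl (vcls Rl w) = tdeg w"
proof -
  assume a: "\<forall>r\<in>Rl. tdeg r = 0"
  have "(SOME w'. w' \<in> vcls Rl w) \<in> vcls Rl w" by (rule someI, rule mem_vcls)
  then have "peq Rl w (SOME w'. w' \<in> vcls Rl w)" by (simp add: vcls_def)
  then show ?thesis unfolding tdegg_def using peq_tdeg a by metis
qed


declare canon.simps[simp del]

definition ctop_pred :: "'a set \<Rightarrow> 'a word set \<Rightarrow> 'a xpt set \<Rightarrow> bool" where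
  "ctop_pred \<A> Rl = (\<lambda>U. U \<subseteq> canon Rl ` cells_carrier \<A> Rl \<and>
     (\<forall>g\<in>grp_carrier \<A> Rl. \<forall>x\<in>gens \<A>.
        openin (top_of_set {0..1}) {s \<in> {0..1}. canon Rl (Edg g x s) \<in> U}) \<and>
     (\<forall>g\<in>grp_carrier \<A> Rl. \<forall>r\<in>Rl.
        openin (top_of_set (cball 0 1)) {z \<in> cball 0 1. canon Rl (Cel g r z) \<in> U}))"

lemma istopology_ctop: "istopology (ctop_pred \<A> Rl)"
  unfolding istopology_def
proof (intro conjI allI impI)
  fix S T assume S: "ctop_pred \<A> Rl S" and T: "ctop_pred \<A> Rl T"
  have e1: "{s \<in> {0..1}. canon Rl (Edg g x s) \<in> S \<inter> T} =
     {s \<in> {0..1}. canon Rl (Edg g x s) \<in> S} \<inter> {s \<in> {0..1}. canon Rl (Edg g x s) \<in> T}" for g x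
    by auto
  have e2: "{z \<in> cball 0 1. canon Rl (Cel g r z) \<in> S \<inter> T} =
     {z \<in> cball 0 1. canon Rl (Cel g r z) \<in> S} \<inter> {z \<in> cball 0 1. canon Rl (Cel g r z) \<in> T}" for g r
    by auto
  show "ctop_pred \<A> Rl (S \<inter> T)"
    using S T unfolding ctop_pred_def e1 e2 by (auto simp del: mem_cball intro!: openin_Int)
next
  fix K :: "'a xpt set set" assume K: "\<forall>S\<in>K. ctop_pred \<A> Rl S"
  have e1: "{s \<in> {0..1}. canon Rl (Edg g x s) \<in> \<Union>K} =
     (\<Union>S\<in>K. {s \<in> {0..1}. canon Rl (Edg g x s) \<in> S})" for g x
    by auto
  have e2: "{z \<in> cball 0 1. canon Rl (Cel g r z) \<in> \<Union>K} =
     (\<Union>S\<in>K. {z \<in> cball 0 1. canon Rl (Cel g r z) \<in> S})" for g r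
    by auto
  show "ctop_pred \<A> Rl (\<Union>K)"
    using K unfolding ctop_pred_def e1 e2 by (auto simp del: mem_cball intro!: openin_Union)
qed

lemma openin_cayley: "openin (cayley_top \<A> Rl) U \<longleftrightarrow> ctop_pred \<A> Rl U"
  unfolding cayley_top_def ctop_pred_def[symmetric] using istopology_ctop[of \<A> Rl] by (simp only: topology_inverse')

lemma edg_in_carrier: "g \<in> grp_carrier \<A> Rl \<Longrightarrow> x \<in> gens \<A> \<Longrightarrow> s \<in> {0..1} \<Longrightarrow> Edg g x s \<in> cells_carrier \<A> Rl"
  by (auto simp: cells_carrier_def)

lemma cel_in_carrier: "g \<in> grp_carrier \<A> Rl \<Longrightarrow> r \<in> Rl \<Longrightarrow> z \<in> cball 0 1 \<Longrightarrow> Cel g r z \<in> cells_carrier \<A> Rl"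
  by (auto simp: cells_carrier_def)

lemma topspace_cayley: "topspace (cayley_top \<A> Rl) = canon Rl ` cells_carrier \<A> Rl"
proof
  show "topspace (cayley_top \<A> Rl) \<subseteq> canon Rl ` cells_carrier \<A> Rl"
    unfolding topspace_def openin_cayley ctop_pred_def by auto
  have "ctop_pred \<A> Rl (canon Rl ` cells_carrier \<A> Rl)"
  proof -
    have "{s \<in> {0..1}. canon Rl (Edg g x s) \<in> canon Rl ` cells_carrier \<A> Rl} = {0..1}"
      if "g \<in> grp_carrier \<A> Rl" "x \<in> gens \<A>" for g x
      using edg_in_carrier[OF that] by auto
    moreover have "{z \<in> cball 0 1. canon Rl (Cel g r z) \<in> canon Rl ` cells_carrier \<A> Rl} = cball 0 1"
      if "g \<in> grp_carrier \<A> Rl" "r \<in> Rl" for g r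
      using cel_in_carrier[OF that] by auto
    ultimately show ?thesis unfolding ctop_pred_def by simp
  qed
  then show "canon Rl ` cells_carrier \<A> Rl \<subseteq> topspace (cayley_top \<A> Rl)"
    by (metis openin_cayley openin_subset)
qed

lemma cont_from_cayley:
  assumes E: "\<And>g x. g \<in> grp_carrier \<A> Rl \<Longrightarrow> x \<in> gens \<A> \<Longrightarrow>
      continuous_map (top_of_set {0..1}) Y (\<lambda>s. f (canon Rl (Edg g x s)))"
    and C: "\<And>g r. g \<in> grp_carrier \<A> Rl \<Longrightarrow> r \<in> Rl \<Longrightarrow>
      continuous_map (top_of_set (cball 0 1)) Y (\<lambda>z. f (canon Rl (Cel g r z)))"
    and T: "f ` topspace (cayley_top \<A> Rl) \<subseteq> topspace Y"
  shows "continuous_map (cayley_top \<A> Rl) Y f"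
  unfolding continuous_map_def
proof (intro conjI allI impI)
  show "f \<in> topspace (cayley_top \<A> Rl) \<rightarrow> topspace Y" using T by auto
  fix U assume U: "openin Y U"
  let ?V = "{x \<in> topspace (cayley_top \<A> Rl). f x \<in> U}"
  have "openin (top_of_set {0..1}) {s \<in> {0..1}. canon Rl (Edg g x s) \<in> ?V}"
    if "g \<in> grp_carrier \<A> Rl" "x \<in> gens \<A>" for g x
  proof -
    have "{s \<in> {0..1}. canon Rl (Edg g x s) \<in> ?V} = {s \<in> topspace (top_of_set {0..1}). f (canon Rl (Edg g x s)) \<in> U}"
      using edg_in_carrier[OF that] by (auto simp: topspace_cayley)
    then show ?thesis using openin_continuous_map_preimage[OF E[OF that] U] by simp
  qed
  moreover have "openin (top_of_set (cball 0 1)) {z \<in> cball 0 1. canon Rl (Cel g r z) \<in> ?V}"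
    if "g \<in> grp_carrier \<A> Rl" "r \<in> Rl" for g r
  proof -
    have "{z \<in> cball 0 1. canon Rl (Cel g r z) \<in> ?V} = {z \<in> topspace (top_of_set (cball 0 1)). f (canon Rl (Cel g r z)) \<in> U}"
      using cel_in_carrier[OF that] by (auto simp: topspace_cayley)
    then show ?thesis using openin_continuous_map_preimage[OF C[OF that] U] by simp
  qed
  ultimately show "openin (cayley_top \<A> Rl) ?V"
    unfolding openin_cayley ctop_pred_def by (auto simp: topspace_cayley)
qed


lemma bparam_range: "0 \<le> bparam z \<and> bparam z < 1"
  using Arg_bounded[of z] pi_gt_zero unfolding bparam_def
  by (auto simp: field_simps)

lemma bparam_cis: assumes "0 \<le> t" "t < 1" shows "bparam (cis (2*pi*t)) = t"
proof (cases "2*pi*t \<le> pi")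
  case True
  then have "Arg (cis (2*pi*t)) = 2*pi*t" using assms pi_gt_zero
  proof (intro Arg_cis)
    have "0 \<le> 2*pi*t" using assms pi_gt_zero by simp
    then show "2*pi*t \<in> {-pi<..pi}" unfolding greaterThanAtMost_iff using True pi_gt_zero by linarith
  qed
  moreover have "\<not> 2*pi*t < 0" using mult_nonneg_nonneg[of pi t] assms pi_gt_zero by linarith
  ultimately show ?thesis using pi_gt_zero by (simp add: bparam_def)
next
  case False
  have "cis (2*pi*t) = cis (2*pi*t - 2*pi)"
    by (metis cis_2pi cis_divide div_by_1)
  moreover have "Arg (cis (2*pi*t - 2*pi)) = 2*pi*t - 2*pi" using assms False pi_gt_zero
    by (intro Arg_cis) (auto simp: algebra_simps)
  moreover have "2*pi*t - 2*pi < 0" using assms pi_gt_zero by auto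
  ultimately show ?thesis using pi_gt_zero by (simp add: bparam_def)
qed

lemma cis_bparam: assumes "norm z = 1" shows "cis (2*pi*bparam z) = z"
proof -
  have z0: "z \<noteq> 0" using assms by auto
  have "cis (2*pi*bparam z) = cis (Arg z)"
  proof (cases "Arg z < 0")
    case True
    then have "2*pi*bparam z = Arg z + 2*pi" by (simp add: bparam_def)
    then show ?thesis by (simp add: cis_mult[symmetric])
  next
    case False
    then show ?thesis by (simp add: bparam_def)
  qed
  also have "\<dots> = sgn z" using z0 by (rule cis_Arg)
  also have "\<dots> = z" using assms by (simp add: sgn_eq)
  finally show ?thesis .
qed

lemma bparam_inj: "inj_on bparam (sphere 0 1)"
  by (rule inj_onI) (metis cis_bparam mem_sphere_0)

lemma bparam_1: "bparam 1 = 0"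
  by (simp add: bparam_def)

lemma circle_quotient:
  "quotient_map (top_of_set {0..1::real}) (top_of_set (sphere (0::complex) 1)) (\<lambda>t. cis (2*pi*t))"
proof (rule continuous_imp_quotient_map)
  show "continuous_map (top_of_set {0..1::real}) (top_of_set (sphere (0::complex) 1)) (\<lambda>t. cis (2*pi*t))"
    by (auto simp: continuous_map_in_subtopology intro!: continuous_intros)
  show "compact_space (top_of_set {0..1::real})" by (simp add: compact_space_subtopology)
  show "Hausdorff_space (top_of_set (sphere (0::complex) 1))"
    by (simp add: Hausdorff_space_subtopology)
  show "(\<lambda>t. cis (2*pi*t)) ` topspace (top_of_set {0..1::real}) = topspace (top_of_set (sphere (0::complex) 1))"
  proof
    show "(\<lambda>t. cis (2*pi*t)) ` topspace (top_of_set {0..1::real}) \<subseteq> topspace (top_of_set (sphere (0::complex) 1))"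
      by auto
    show "topspace (top_of_set (sphere (0::complex) 1)) \<subseteq> (\<lambda>t. cis (2*pi*t)) ` topspace (top_of_set {0..1::real})"
    proof
      fix z :: complex assume "z \<in> topspace (top_of_set (sphere 0 1))"
      then have "norm z = 1" by simp
      then show "z \<in> (\<lambda>t. cis (2*pi*t)) ` topspace (top_of_set {0..1::real})"
        using bparam_range[of z] cis_bparam[of z] by (auto intro!: image_eqI[where x="bparam z"])
    qed
  qed
qed

lemma sphere_cont_via_circle:
  fixes B :: "complex \<Rightarrow> real"
  assumes "continuous_on {0..1} (\<lambda>t. B (cis (2*pi*t)))"
  shows "continuous_on (sphere 0 1) B"
proof -
  have "continuous_map (top_of_set {0..1::real}) euclidean (B \<circ> (\<lambda>t. cis (2*pi*t)))"
    using assms by (simp add: o_def)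
  then have "continuous_map (top_of_set (sphere 0 1)) euclidean B"
    by (rule continuous_compose_quotient_map[OF circle_quotient])
  then show ?thesis by simp
qed

lemma radial_cont:
  fixes B :: "complex \<Rightarrow> real"
  assumes B: "continuous_on (sphere 0 1) B"
  shows "continuous_on (cball 0 1) (\<lambda>z. norm z * B (sgn z))"
proof -
  obtain M where M: "\<And>w. w \<in> sphere 0 1 \<Longrightarrow> \<bar>B w\<bar> \<le> M"
    using compact_imp_bounded[OF compact_continuous_image[OF B compact_sphere]]
    unfolding bounded_iff by fastforce
  have cont0: "continuous_on (- {0}) (\<lambda>z. norm z * B (sgn z))"
    by (intro continuous_intros continuous_on_compose2[OF B]) (auto simp: norm_sgn split: if_splits)
  have "continuous (at z within cball 0 1) (\<lambda>z. norm z * B (sgn z))" if z: "z \<in> cball 0 1" for z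
  proof (cases "z = 0")
    case False
    then have "continuous (at z) (\<lambda>z. norm z * B (sgn z))"
      using cont0 by (simp add: continuous_on_eq_continuous_at open_Compl)
    then show ?thesis by (rule continuous_at_imp_continuous_within)
  next
    case True
    have "((\<lambda>z. norm z * B (sgn z)) \<longlongrightarrow> 0) (at 0 within cball 0 1)"
    proof (rule Lim_null_comparison)
      show "\<forall>\<^sub>F x in at 0 within cball 0 1. norm (norm x * B (sgn x)) \<le> norm x * max M 0"
      proof (rule always_eventually, rule allI)
        fix x :: complex
        show "norm (norm x * B (sgn x)) \<le> norm x * max M 0"
        proof (cases "x = 0")
          case False
          then have "\<bar>B (sgn x)\<bar> \<le> max M 0" using M[of "sgn x"] by (simp add: norm_sgn)
          then show ?thesis by (simp add: abs_mult mult_left_mono)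
        qed simp
      qed
      have "((\<lambda>x::complex. norm x * max M 0) \<longlongrightarrow> norm (0::complex) * max M 0) (at 0 within cball 0 1)"
        by (intro tendsto_intros)
      then show "((\<lambda>x::complex. norm x * max M 0) \<longlongrightarrow> 0) (at 0 within cball 0 1)" by simp
    qed
    then show ?thesis using True by (simp add: continuous_within)
  qed
  then show ?thesis by (simp add: continuous_on_eq_continuous_within)
qed


lemma canon_edge_0[simp]: "canon_edge Rl g x 0 = Vtx g"
  by (simp add: canon_edge_def)
lemma canon_edge_1[simp]: "canon_edge Rl g x 1 = Vtx (gmul Rl g (x, False))"
  by (simp add: canon_edge_def)

lemma oe_pt_0: "oe_pt Rl (vcls Rl w, l) 0 = Vtx (vcls Rl w)"
proof (cases "snd l")
  case True
  then have "(fst l, False) = inv_letter l" by (simp add: inv_letter_def)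
  then show ?thesis using True by (simp add: oe_pt_def gmul_back)
next
  case False
  then show ?thesis by (simp add: oe_pt_def)
qed

lemma oe_pt_1: "oe_pt Rl (u, l) 1 = Vtx (gmul Rl u l)"
proof (cases "snd l")
  case False
  then have "(fst l, False) = l" by (cases l) auto
  then show ?thesis using False by (simp add: oe_pt_def)
qed (simp add: oe_pt_def)

lemma oe_pt_edge: "oe_pt Rl (u, l) s =
   canon Rl (Edg (if snd l then gmul Rl u l else u) (fst l) (if snd l then 1 - s else s))"
  by (simp add: oe_pt_def canon.simps)

lemma attach_seg:
  assumes "r \<noteq> []" "real j \<le> real (length r) * \<theta>" "real (length r) * \<theta> < real j + 1"
  shows "attach Rl g r \<theta> = oe_pt Rl (gmulw Rl g (take j r), r ! j) (real (length r) * \<theta> - real j)"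
proof -
  have "\<lfloor>real (length r) * \<theta>\<rfloor> = int j" using assms by (simp add: floor_eq_iff)
  then have "nat \<lfloor>real (length r) * \<theta>\<rfloor> = j" by simp
  then show ?thesis using assms(1) unfolding attach_def Let_def by simp
qed

lemma oe_pt_cont:
  assumes E: "\<And>h x. continuous_on {0..1} (\<lambda>s. f (canon Rl (Edg h x s)))"
    and S: "\<And>t. t \<in> S \<Longrightarrow> \<sigma> t \<in> {0..1}" and C: "continuous_on S \<sigma>"
  shows "continuous_on S (\<lambda>t. f (oe_pt Rl (u, l) (\<sigma> t)))"
proof (cases "snd l")
  case True
  have "continuous_on S (\<lambda>t. f (canon Rl (Edg (gmul Rl u l) (fst l) (1 - \<sigma> t))))"
    by (rule continuous_on_compose2[OF E]) (use S in \<open>auto intro!: continuous_intros C\<close>)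
  then show ?thesis using True by (simp add: oe_pt_edge)
next
  case False
  have "continuous_on S (\<lambda>t. f (canon Rl (Edg u (fst l) (\<sigma> t))))"
    by (rule continuous_on_compose2[OF E]) (use S C in \<open>auto\<close>)
  then show ?thesis using False by (simp add: oe_pt_edge)
qed

lemma attach_circle_cont:
  assumes E: "\<And>h x. continuous_on {0..1} (\<lambda>s. f (canon Rl (Edg h x s)))"
    and g: "g = vcls Rl w" and r: "r \<in> Rl"
  shows "continuous_on {0..1} (\<lambda>t. f (attach Rl g r (bparam (cis (2*pi*t)))))"
proof (cases "r = []")
  case True
  then show ?thesis by (simp add: attach_def)
next
  case False
  define n where "n = length r"
  have n0: "n > 0" using False by (simp add: n_def)
  let ?I = "\<lambda>j::nat. {real j / real n .. (real j + 1) / real n}"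
  have cover: "{0..1} = (\<Union>j\<in>{..<n}. ?I j)"
  proof
    show "{0..1} \<subseteq> (\<Union>j\<in>{..<n}. ?I j)"
    proof
      fix t :: real assume t: "t \<in> {0..1}"
      define j where "j = (if t = 1 then n - 1 else nat \<lfloor>real n * t\<rfloor>)"
      have "j < n \<and> t \<in> ?I j"
      proof (cases "t = 1")
        case True then show ?thesis using n0 by (simp add: j_def field_simps of_nat_diff)
      next
        case False
        then have t1: "t < 1" using t by auto
        have "0 \<le> real n * t" using t by simp
        then have fl: "real (nat \<lfloor>real n * t\<rfloor>) \<le> real n * t" "real n * t < real (nat \<lfloor>real n * t\<rfloor>) + 1"
          by linarith+
        have "real n * t < real n" using t1 n0 by simp
        then have "nat \<lfloor>real n * t\<rfloor> < n" using fl by linarith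
        then show ?thesis using fl n0 False by (simp add: j_def field_simps)
      qed
      then show "t \<in> (\<Union>j\<in>{..<n}. ?I j)" by blast
    qed
    show "(\<Union>j\<in>{..<n}. ?I j) \<subseteq> {0..1}"
    proof (rule UN_least)
      fix j assume j: "j \<in> {..<n}"
      have "real j + 1 \<le> real n" using j by simp
      then have a: "(real j + 1) / real n \<le> 1" using n0 by simp
      have b: "0 \<le> real j / real n" by simp
      show "?I j \<subseteq> {0..1}"
      proof
        fix t assume "t \<in> ?I j"
        then have "real j / real n \<le> t" "t \<le> (real j + 1) / real n" by auto
        then show "t \<in> {0..1}" using a b unfolding atLeastAtMost_iff by linarith
      qed
    qed
  qed
  have piece: "continuous_on (?I j) (\<lambda>t. f (attach Rl g r (bparam (cis (2*pi*t)))))" if j: "j < n" for j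
  proof -
    let ?u = "gmulw Rl g (take j r)"
    have "continuous_on (?I j) (\<lambda>t. f (oe_pt Rl (?u, r ! j) (real n * t - real j)))"
    proof (rule oe_pt_cont[OF E])
      fix t assume t: "t \<in> ?I j"
      then show "real n * t - real j \<in> {0..1}" using n0 by (auto simp: field_simps)
    qed (intro continuous_intros)
    moreover have "f (attach Rl g r (bparam (cis (2*pi*t)))) = f (oe_pt Rl (?u, r ! j) (real n * t - real j))"
      if t: "t \<in> ?I j" for t
    proof -
      have t1: "real j \<le> real n * t" "real n * t \<le> real j + 1" using t n0 by (auto simp: field_simps)
      have "real j / real n \<le> t" using t by simp
      then have tnn: "0 \<le> t" using divide_nonneg_nonneg[of "real j" "real n"] by linarith
      show ?thesis
      proof (cases "real n * t < real j + 1")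
        case True
        have "real n * t < real n" using True j by linarith
        then have "t < 1" using n0 by simp
        then have "bparam (cis (2*pi*t)) = t" using tnn by (simp add: bparam_cis)
        then show ?thesis using attach_seg[OF False, of j t] t1 True by (simp add: n_def)
      next
        case False2: False
        then have eq: "real n * t = real j + 1" using t1 by linarith
        have end_pt: "oe_pt Rl (?u, r ! j) (real n * t - real j) = Vtx (vcls Rl (w @ take (Suc j) r))"
          using eq j by (simp add: oe_pt_1 g gmul_vcls gmulw_vcls take_Suc_conv_app_nth n_def)
        show ?thesis
        proof (cases "Suc j < n")
          case True
          then have "real n * t < real n" using eq by simp
          then have "t < 1" using n0 by simp
          then have "bparam (cis (2*pi*t)) = t" using tnn by (simp add: bparam_cis)
          moreover have "attach Rl g r t = oe_pt Rl (gmulw Rl g (take (Suc j) r), r ! Suc j) 0"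
            using attach_seg[OF \<open>r \<noteq> []\<close>, of "Suc j" t] eq by (simp add: n_def)
          ultimately show ?thesis using end_pt by (simp add: g gmulw_vcls oe_pt_0)
        next
          case False
          then have sj: "Suc j = n" using j by simp
          then have "real n = real j + 1" by (metis of_nat_Suc add.commute)
          then have "real n * t = real n * 1" using eq by simp
          then have "t = 1" using n0 by simp
          then have "bparam (cis (2*pi*t)) = 0" by (simp add: bparam_1)
          moreover have "attach Rl g r 0 = oe_pt Rl (gmulw Rl g (take 0 r), r ! 0) 0"
            using attach_seg[OF \<open>r \<noteq> []\<close>, of 0 0] by simp
          moreover have "vcls Rl (w @ take (Suc j) r) = vcls Rl w"
            using sj r by (simp add: n_def vcls_eq_iff peq_rel_tail)
          ultimately show ?thesis using end_pt by (simp add: g gmulw_vcls oe_pt_0)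
        qed
      qed
    qed
    ultimately show ?thesis by (metis (no_types, lifting) continuous_on_eq)
  qed
  show ?thesis
    unfolding cover by (rule continuous_on_closed_Union) (use piece in auto)
qed


definition is_cel :: "('v,'l,'r) cpt \<Rightarrow> bool" where
  "is_cel p = (case p of Cel _ _ _ \<Rightarrow> True | _ \<Rightarrow> False)"

lemma not_cel_canon_edge: "\<not> is_cel (canon_edge Rl g x s)"
  by (simp add: canon_edge_def is_cel_def)

lemma not_cel_oe_pt: "\<not> is_cel (oe_pt Rl e s)"
  by (simp add: oe_pt_def Let_def not_cel_canon_edge)

lemma not_cel_attach: "\<not> is_cel (attach Rl g r \<theta>)"
proof (cases "r = []")
  case True then show ?thesis by (simp add: attach_def is_cel_def)
next
  case False
  have "attach Rl g r \<theta> = oe_pt Rl (gmulw Rl g (take (nat \<lfloor>real (length r) * \<theta>\<rfloor>) r), r ! nat \<lfloor>real (length r) * \<theta>\<rfloor>) (real (length r) * \<theta> - real (nat \<lfloor>real (length r) * \<theta>\<rfloor>))"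
    by (simp add: attach_def Let_def False)
  then show ?thesis using not_cel_oe_pt by metis
qed

definition cext :: "'a word set \<Rightarrow> ('a xpt \<Rightarrow> real) \<Rightarrow> 'a xpt \<Rightarrow> real" where
  "cext Rl f p = (case p of Cel g r z \<Rightarrow> norm z * f (attach Rl g r (bparam (sgn z))) | _ \<Rightarrow> f p)"

lemma cext_not_cel: "\<not> is_cel p \<Longrightarrow> cext Rl f p = f p"
  by (cases p) (auto simp: cext_def is_cel_def)

lemma grp_carrier_vcls: "g \<in> grp_carrier \<A> Rl \<Longrightarrow> \<exists>w. g = vcls Rl w"
  by (auto simp: grp_carrier_def)

lemma cext_cont:
  assumes E: "\<And>h x. continuous_on {0..1} (\<lambda>s. f (canon Rl (Edg h x s)))"
  shows "continuous_map (cayley_top \<A> Rl) euclidean (cext Rl f)"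
proof (rule cont_from_cayley)
  fix g x
  have "cext Rl f (canon Rl (Edg g x s)) = f (canon Rl (Edg g x s))" for s
    by (simp add: canon.simps cext_not_cel not_cel_canon_edge)
  then show "continuous_map (top_of_set {0..1}) euclidean (\<lambda>s. cext Rl f (canon Rl (Edg g x s)))"
    using E[of g x] by simp
next
  fix g r assume g: "g \<in> grp_carrier \<A> Rl" and r: "r \<in> Rl"
  obtain w where w: "g = vcls Rl w" using grp_carrier_vcls[OF g] by blast
  have B: "continuous_on (sphere 0 1) (\<lambda>z. f (attach Rl g r (bparam z)))"
    by (rule sphere_cont_via_circle, rule attach_circle_cont[OF E w r])
  have "continuous_on (cball 0 1) (\<lambda>z. norm z * f (attach Rl g r (bparam (sgn z))))"
    using radial_cont[OF B] by simp
  moreover have "norm z * f (attach Rl g r (bparam (sgn z))) = cext Rl f (canon Rl (Cel g r z))"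
    if "z \<in> cball 0 1" for z
  proof (cases "norm z = 1")
    case True
    then have "sgn z = z" by (simp add: sgn_eq)
    then show ?thesis using True by (simp add: canon.simps cext_not_cel not_cel_attach)
  next
    case False
    then show ?thesis by (simp add: canon.simps cext_def)
  qed
  ultimately have "continuous_on (cball 0 1) (\<lambda>z. cext Rl f (canon Rl (Cel g r z)))"
    by (rule continuous_on_eq)
  then show "continuous_map (top_of_set (cball 0 1)) euclidean (\<lambda>z. cext Rl f (canon Rl (Cel g r z)))"
    by simp
qed simp

definition tent :: "'a word set \<Rightarrow> 'a grp \<Rightarrow> 'a xpt \<Rightarrow> real" where
  "tent Rl g p = (case p of Vtx h \<Rightarrow> if h = g then 1 else 0
     | Edg h x s \<Rightarrow> (if h = g then 1 - s else 0) + (if gmul Rl h (x, False) = g then s else 0)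
     | Cel _ _ _ \<Rightarrow> 0)"

definition edgeA :: "'a grp \<times> 'a option \<Rightarrow> 'a xpt \<Rightarrow> real" where
  "edgeA e p = (case p of Edg h x s \<Rightarrow> if (h, x) = e then s * (1 - s) else 0 | _ \<Rightarrow> 0)"

definition edgeB :: "'a grp \<times> 'a option \<Rightarrow> 'a xpt \<Rightarrow> real" where
  "edgeB e p = (case p of Edg h x s \<Rightarrow> if (h, x) = e then s * s * (1 - s) else 0 | _ \<Rightarrow> 0)"

definition cellF :: "'a grp \<times> 'a word \<Rightarrow> nat \<Rightarrow> 'a xpt \<Rightarrow> real" where
  "cellF c k p = (case p of Cel g r z \<Rightarrow>
     if (g, r) = c \<and> norm z < 1 then (1 - norm z) * (if k = 0 then 1 else if k = 1 then Re z else Im z) else 0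
   | _ \<Rightarrow> 0)"

lemma tent_edge_cont: "continuous_on {0..1} (\<lambda>s. tent Rl g (canon Rl (Edg h x s)))"
proof -
  have "tent Rl g (canon Rl (Edg h x s)) = (if h = g then 1 - s else 0) + (if gmul Rl h (x, False) = g then s else 0)" for s
    by (simp add: canon.simps canon_edge_def tent_def)
  then show ?thesis by (cases "h = g"; cases "gmul Rl h (x, False) = g") (simp_all add: continuous_intros)
qed

lemma edgeA_edge_cont: "continuous_on {0..1} (\<lambda>s. edgeA e (canon Rl (Edg h x s)))"
proof -
  have "edgeA e (canon Rl (Edg h x s)) = (if (h, x) = e then s * (1 - s) else 0)" for s
    by (simp add: canon.simps canon_edge_def edgeA_def)
  then show ?thesis by (cases "(h, x) = e") (simp_all add: continuous_intros)
qed

lemma edgeB_edge_cont: "continuous_on {0..1} (\<lambda>s. edgeB e (canon Rl (Edg h x s)))"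
proof -
  have "edgeB e (canon Rl (Edg h x s)) = (if (h, x) = e then s * s * (1 - s) else 0)" for s
    by (simp add: canon.simps canon_edge_def edgeB_def)
  then show ?thesis by (cases "(h, x) = e") (simp_all add: continuous_intros)
qed

lemma cellF_cont: "continuous_map (cayley_top \<A> Rl) euclidean (cellF c k)"
proof (rule cont_from_cayley)
  fix g x
  have "cellF c k (canon Rl (Edg g x s)) = 0" for s
    using not_cel_canon_edge[of Rl g x s]
    by (auto simp: canon.simps cellF_def is_cel_def split: cpt.splits)
  then show "continuous_map (top_of_set {0..1}) euclidean (\<lambda>s. cellF c k (canon Rl (Edg g x s)))"
    by simp
next
  fix g r
  have eqs: "(if (g, r) = c then (1 - norm z) * (if k = 0 then 1 else if k = 1 then Re z else Im z) else 0) =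
     cellF c k (canon Rl (Cel g r z))"
    if "z \<in> cball 0 1" for z
  proof (cases "norm z = 1")
    case True
    then show ?thesis using not_cel_attach[of Rl g r "bparam z"]
      by (auto simp: canon.simps cellF_def is_cel_def split: cpt.splits)
  next
    case False
    then show ?thesis using that by (auto simp: canon.simps cellF_def)
  qed
  have cont: "continuous_on (cball 0 1)
     (\<lambda>z. if (g, r) = c then (1 - norm z) * (if k = 0 then 1 else if k = 1 then Re z else Im z) else 0)"
    by (cases "(g, r) = c"; cases "k = 0"; cases "k = 1") (auto intro!: continuous_intros)
  from cont eqs have "continuous_on (cball 0 1) (\<lambda>z. cellF c k (canon Rl (Cel g r z)))"
    by (rule continuous_on_eq)
  then show "continuous_map (top_of_set (cball 0 1)) euclidean (\<lambda>z. cellF c k (canon Rl (Cel g r z)))"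
    by simp
qed simp

type_synonym 'a idx = "'a grp + (('a grp \<times> 'a option) \<times> bool) + (('a grp \<times> 'a word) \<times> nat)"

definition Fmap :: "'a word set \<Rightarrow> 'a xpt \<Rightarrow> 'a idx \<Rightarrow> real" where
  "Fmap Rl p = (\<lambda>i. case i of Inl g \<Rightarrow> cext Rl (tent Rl g) p
     | Inr (Inl (e, b)) \<Rightarrow> cext Rl (if b then edgeA e else edgeB e) p
     | Inr (Inr (c, k)) \<Rightarrow> cellF c k p)"

lemma Fmap_cont: "continuous_map (cayley_top \<A> Rl) (product_topology (\<lambda>_. euclidean) UNIV) (Fmap Rl)"
  unfolding continuous_map_componentwise_UNIV
proof
  fix i :: "'a idx"
  show "continuous_map (cayley_top \<A> Rl) euclidean (\<lambda>x. Fmap Rl x i)"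
  proof (cases i)
    case (Inl g)
    then show ?thesis by (simp add: Fmap_def cext_cont[OF tent_edge_cont])
  next
    case (Inr j)
    show ?thesis
    proof (cases j)
      case (Inl eb)
      obtain e b where "eb = (e, b)" by (cases eb)
      then show ?thesis using Inr Inl
        by (cases b) (simp_all add: Fmap_def cext_cont[OF edgeA_edge_cont] cext_cont[OF edgeB_edge_cont])
    next
      case (Inr ck)
      obtain c k where "ck = (c, k)" by (cases ck)
      then show ?thesis using \<open>i = Inr j\<close> Inr by (simp add: Fmap_def cellF_cont)
    qed
  qed
qed



lemma canon_edge_cases: "(\<exists>h. canon_edge Rl g x s = Vtx h) \<or> (canon_edge Rl g x s = Edg g x s \<and> s \<noteq> 0 \<and> s \<noteq> 1)"
  by (simp add: canon_edge_def)

lemma oe_pt_cases: assumes "\<sigma> \<in> {0..1}"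
  shows "(\<exists>h. oe_pt Rl e \<sigma> = Vtx h) \<or> (\<exists>h x s. oe_pt Rl e \<sigma> = Edg h x s \<and> 0 < s \<and> s < 1)"
proof -
  obtain u l where e: "e = (u, l)" by (cases e)
  let ?h = "if snd l then gmul Rl u l else u" and ?s = "if snd l then 1 - \<sigma> else \<sigma>"
  have s: "?s \<in> {0..1}" using assms by auto
  have "oe_pt Rl e \<sigma> = canon_edge Rl ?h (fst l) ?s" using e by (simp add: oe_pt_edge canon.simps)
  then show ?thesis using canon_edge_cases[of Rl ?h "fst l" ?s] s by force
qed

lemma topspace_cases:
  assumes "p \<in> topspace (cayley_top \<A> Rl)"
  shows "(\<exists>g. p = Vtx g) \<or> (\<exists>g x s. p = Edg g x s \<and> 0 < s \<and> s < 1) \<or> (\<exists>g r z. p = Cel g r z \<and> norm z < 1)"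
proof -
  obtain c where c: "c \<in> cells_carrier \<A> Rl" "p = canon Rl c"
    using assms by (auto simp: topspace_cayley)
  show ?thesis
  proof (cases c)
    case (Vtx g) then show ?thesis using c by (simp add: canon.simps)
  next
    case (Edg g x s)
    then have "s \<in> {0..1}" using c by (auto simp: cells_carrier_def)
    then show ?thesis using c Edg canon_edge_cases[of Rl g x s] by (force simp: canon.simps)
  next
    case (Cel g r z)
    then have z: "norm z \<le> 1" using c by (auto simp: cells_carrier_def)
    show ?thesis
    proof (cases "norm z = 1")
      case False
      then show ?thesis using c Cel z by (simp add: canon.simps)
    next
      case True
      then have p: "p = attach Rl g r (bparam z)" using c Cel by (simp add: canon.simps)
      show ?thesis
      proof (cases "r = []")
        case True then show ?thesis using p by (simp add: attach_def)
      next
        case False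
        define x where "x = real (length r) * bparam z"
        define j where "j = nat \<lfloor>x\<rfloor>"
        have x0: "0 \<le> x" using bparam_range[of z] by (simp add: x_def)
        have sig: "x - real j \<in> {0..1}" using x0 unfolding j_def by auto linarith+
        have "attach Rl g r (bparam z) = oe_pt Rl (gmulw Rl g (take j r), r ! j) (x - real j)"
          using False by (simp add: attach_def Let_def x_def j_def)
        then show ?thesis using p oe_pt_cases[OF sig, of Rl "(gmulw Rl g (take j r), r ! j)"] by metis
      qed
    qed
  qed
qed

lemma Fmap_Vtx: "Fmap Rl (Vtx g) (Inl h) = (if g = h then 1 else 0)"
  "Fmap Rl (Vtx g) (Inr (Inl (e, b))) = 0" "Fmap Rl (Vtx g) (Inr (Inr (c, k))) = 0"
  by (simp_all add: Fmap_def cext_def tent_def edgeA_def edgeB_def cellF_def)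

lemma Fmap_Edg: "Fmap Rl (Edg g x s) (Inr (Inl (e, True))) = (if (g, x) = e then s * (1 - s) else 0)"
  "Fmap Rl (Edg g x s) (Inr (Inl (e, False))) = (if (g, x) = e then s * s * (1 - s) else 0)"
  "Fmap Rl (Edg g x s) (Inr (Inr (c, k))) = 0"
  by (simp_all add: Fmap_def cext_def tent_def edgeA_def edgeB_def cellF_def)

lemma Fmap_Cel: "norm z < 1 \<Longrightarrow> Fmap Rl (Cel g r z) (Inr (Inr (c, k))) =
   (if (g, r) = c then (1 - norm z) * (if k = 0 then 1 else if k = 1 then Re z else Im z) else 0)"
  by (simp add: Fmap_def cellF_def)

lemma Fmap_inj: "inj_on (Fmap Rl) (topspace (cayley_top \<A> Rl))"
proof (rule inj_onI)
  fix p q assume p: "p \<in> topspace (cayley_top \<A> Rl)" and q: "q \<in> topspace (cayley_top \<A> Rl)"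
    and eq: "Fmap Rl p = Fmap Rl q"
  have E: "Fmap Rl p i = Fmap Rl q i" for i using eq by simp
  have E': "Fmap Rl q i = Fmap Rl p i" for i using eq by simp
  have cel: "p = q" if "p = Cel g r z" "norm z < 1"
    "q \<in> topspace (cayley_top \<A> Rl)" "\<And>i. Fmap Rl p i = Fmap Rl q i" for p q g r z
  proof -
    have pos: "Fmap Rl p (Inr (Inr ((g, r), 0::nat))) > 0" using that(1,2) by (simp add: Fmap_Cel)
    from topspace_cases[OF that(3)] show ?thesis
    proof (elim disjE exE conjE)
      fix h assume "q = Vtx h" then show ?thesis using pos that(4) by (simp add: Fmap_Vtx)
    next
      fix h x s assume "q = Edg h x s" then show ?thesis using pos that(4) by (simp add: Fmap_Edg)
    next
      fix h r' z' assume q: "q = Cel h r' z'" "norm z' < 1"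
      have f1: "Fmap Rl p (Inr (Inr ((g, r), 0::nat))) = 1 - norm z"
        using Fmap_Cel[of z Rl g r "(g, r)" 0] that(1,2) by simp
      have f2: "Fmap Rl q (Inr (Inr ((g, r), 0::nat))) = (if (h, r') = (g, r) then (1 - norm z') else 0)"
        using Fmap_Cel[of z' Rl h r' "(g, r)" 0] q by simp
      have e0: "(1 - norm z) = (if (h, r') = (g, r) then (1 - norm z') else 0)"
        using that(4)[of "Inr (Inr ((g, r), 0::nat))"] f1 f2 by simp
      then have hr: "(h, r') = (g, r)" using that(2) by (auto split: if_splits)
      then have n: "norm z = norm z'" using e0 by simp
      have "(1 - norm z) * Re z = (1 - norm z') * Re z'"
        using that(4)[of "Inr (Inr ((g, r), 1::nat))"] that(1,2) q hr by (simp add: Fmap_Cel)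
      then have "Re z = Re z'" using n that(2) by simp
      moreover have "(1 - norm z) * Im z = (1 - norm z') * Im z'"
        using that(4)[of "Inr (Inr ((g, r), 2::nat))"] that(1,2) q hr by (simp add: Fmap_Cel)
      then have "Im z = Im z'" using n that(2) by simp
      ultimately show ?thesis using that(1) q hr by (simp add: complex_eqI)
    qed
  qed
  have edg: "p = q" if "p = Edg g x s" "0 < s" "s < 1"
    "q \<in> topspace (cayley_top \<A> Rl)" "\<And>i. Fmap Rl p i = Fmap Rl q i"
    "\<not> (\<exists>g r z. q = Cel g r z \<and> norm z < 1)" for p q g x s
  proof -
    have pos: "Fmap Rl p (Inr (Inl ((g, x), True))) > 0" using that(1,2,3) by (simp add: Fmap_Edg)
    from topspace_cases[OF that(4)] that(6) show ?thesis
    proof (elim disjE exE conjE)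
      fix h assume "q = Vtx h" then show ?thesis using pos that(5) by (simp add: Fmap_Vtx)
    next
      fix h x' s' assume q: "q = Edg h x' s'" "0 < s'" "s' < 1"
      have e0: "s * (1 - s) = (if (h, x') = (g, x) then s' * (1 - s') else 0)"
        using that(5)[of "Inr (Inl ((g, x), True))"] that(1) q by (simp add: Fmap_Edg)
      then have hx: "(h, x') = (g, x)" using that(2,3) by (auto split: if_splits)
      then have a: "s * (1 - s) = s' * (1 - s')" using e0 by simp
      have b: "s * s * (1 - s) = s' * s' * (1 - s')"
        using that(5)[of "Inr (Inl ((g, x), False))"] that(1) q hx by (simp add: Fmap_Edg)
      have "s * (s * (1 - s)) = s * s * (1 - s)" by (simp only: mult.assoc)
      also have "\<dots> = s' * s' * (1 - s')" by (rule b)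
      also have "\<dots> = s' * (s' * (1 - s'))" by (simp only: mult.assoc)
      also have "\<dots> = s' * (s * (1 - s))" by (simp only: a)
      finally have "s * (s * (1 - s)) = s' * (s * (1 - s))" .
      then have "s = s'" using that(2,3) by simp
      then show ?thesis using that(1) q hx by simp
    qed auto
  qed
  from topspace_cases[OF p] show "p = q"
  proof (elim disjE exE conjE)
    fix g assume pv: "p = Vtx g"
    from topspace_cases[OF q] show ?thesis
    proof (elim disjE exE conjE)
      fix h assume qv: "q = Vtx h"
      have "(if g = g then 1 else 0) = (if h = g then 1 else (0::real))"
        using E[of "Inl g"] pv qv by (simp add: Fmap_Vtx)
      then show ?thesis using pv qv by (auto split: if_splits)
    next
      fix h x s assume "q = Edg h x s" "0 < s" "s < 1"
      then have "q = p" by (intro edg[of q h x s p, OF _ _ _ p E']) (use pv in auto)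
      then show ?thesis by simp
    next
      fix h r z assume "q = Cel h r z" "norm z < 1"
      then have "q = p" by (intro cel[of q h r z p, OF _ _ p E'])
      then show ?thesis by simp
    qed
  next
    fix g x s assume pe: "p = Edg g x s" "0 < s" "s < 1"
    have nc: "\<not> (\<exists>g r z. q = Cel g r z \<and> norm z < 1)"
    proof
      assume "\<exists>g r z. q = Cel g r z \<and> norm z < 1"
      then obtain g' r' z' where qc: "q = Cel g' r' z'" "norm z' < 1" by blast
      then have "q = p" by (intro cel[of q g' r' z' p, OF _ _ p E'])
      then show False using pe qc by simp
    qed
    show ?thesis by (rule edg[OF pe q E nc])
  next
    fix g r z assume "p = Cel g r z" "norm z < 1"
    then show ?thesis by (rule cel[OF _ _ q E])
  qed
qed

lemma cayley_Hausdorff: "Hausdorff_space (cayley_top \<A> Rl)"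
  by (rule Hausdorff_space_injective_preimage[OF _ Fmap_cont Fmap_inj])
     (simp add: Hausdorff_space_product_topology)



declare canon.simps[simp del]

definition vert :: "('v,'l,'r) cpt \<Rightarrow> 'v" where
  "vert p = (case p of Vtx g \<Rightarrow> g | Edg g _ _ \<Rightarrow> g | Cel g _ _ \<Rightarrow> g)"

lemma vert_simps[simp]: "vert (Vtx g) = g" "vert (Edg g x s) = g" "vert (Cel g r z) = g"
  by (simp_all add: vert_def)

lemma subsing_finite: assumes "\<And>a b. a \<in> A \<Longrightarrow> b \<in> A \<Longrightarrow> a = b" shows "finite A"
proof (cases "A = {}")
  case False
  then obtain a where "a \<in> A" by blast
  then have "A = {a}" using assms by blast
  then show ?thesis by simp
qed simp

lemma edg_subsing: "inj_on vert T \<Longrightarrow> finite {s. Edg g x s \<in> T}"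
proof (rule subsing_finite)
  fix a b assume "inj_on vert T" "a \<in> {s. Edg g x s \<in> T}" "b \<in> {s. Edg g x s \<in> T}"
  then have "Edg g x a = Edg g x b" using inj_onD[of vert T "Edg g x a" "Edg g x b"] by auto
  then show "a = b" by simp
qed

lemma cel_subsing: "inj_on vert T \<Longrightarrow> finite {z. Cel g r z \<in> T}"
proof (rule subsing_finite)
  fix a b assume "inj_on vert T" "a \<in> {z. Cel g r z \<in> T}" "b \<in> {z. Cel g r z \<in> T}"
  then have "Cel g r a = Cel g r b" using inj_onD[of vert T "Cel g r a" "Cel g r b"] by auto
  then show "a = b" by simp
qed

lemma canon_edge_fin: "inj_on vert T \<Longrightarrow> finite {s. canon_edge Rl h x s \<in> T}"
proof -
  assume T: "inj_on vert T"
  have "{s. canon_edge Rl h x s \<in> T} \<subseteq> {0, 1} \<union> {s. Edg h x s \<in> T}"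
    by (auto simp: canon_edge_def)
  then show ?thesis using edg_subsing[OF T] finite_subset by blast
qed

lemma oe_fin: "inj_on vert T \<Longrightarrow> finite {\<sigma>. oe_pt Rl e \<sigma> \<in> T}"
proof -
  assume T: "inj_on vert T"
  obtain u l where e: "e = (u, l)" by (cases e)
  let ?h = "if snd l then gmul Rl u l else u"
  let ?m = "\<lambda>s::real. if snd l then 1 - s else s"
  have "{\<sigma>. oe_pt Rl e \<sigma> \<in> T} \<subseteq> ?m ` {s. canon_edge Rl ?h (fst l) s \<in> T}"
  proof
    fix \<sigma> assume "\<sigma> \<in> {\<sigma>. oe_pt Rl e \<sigma> \<in> T}"
    then have "canon_edge Rl ?h (fst l) (?m \<sigma>) \<in> T" using e by (simp add: oe_pt_edge canon.simps)
    moreover have "\<sigma> = ?m (?m \<sigma>)" by (cases "snd l") simp_all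
    ultimately show "\<sigma> \<in> ?m ` {s. canon_edge Rl ?h (fst l) s \<in> T}" by (intro rev_image_eqI[of "?m \<sigma>"]) simp_all
  qed
  then show ?thesis using canon_edge_fin[OF T] finite_subset by blast
qed

lemma attach_fin:
  assumes T: "inj_on vert T" and r: "r \<noteq> []"
  shows "finite {\<theta> \<in> {0..<1}. attach Rl g r \<theta> \<in> T}"
proof -
  let ?n = "length r"
  let ?S = "\<lambda>j. {\<sigma>. oe_pt Rl (gmulw Rl g (take j r), r ! j) \<sigma> \<in> T}"
  have "{\<theta> \<in> {0..<1}. attach Rl g r \<theta> \<in> T} \<subseteq> (\<Union>j<?n. (\<lambda>\<sigma>. (\<sigma> + real j) / real ?n) ` ?S j)"
  proof
    fix \<theta> assume th: "\<theta> \<in> {\<theta> \<in> {0..<1}. attach Rl g r \<theta> \<in> T}"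
    define j where "j = nat \<lfloor>real ?n * \<theta>\<rfloor>"
    have x0: "0 \<le> real ?n * \<theta>" using th by simp
    have fl: "real j \<le> real ?n * \<theta>" "real ?n * \<theta> < real j + 1" using x0 unfolding j_def by linarith+
    have "real ?n * \<theta> < real ?n" using th r by simp
    then have jn: "j < ?n" using fl by linarith
    have "attach Rl g r \<theta> = oe_pt Rl (gmulw Rl g (take j r), r ! j) (real ?n * \<theta> - real j)"
      by (rule attach_seg[OF r fl])
    then have "real ?n * \<theta> - real j \<in> ?S j" using th by simp
    moreover have "\<theta> = ((real ?n * \<theta> - real j) + real j) / real ?n" using r by simp
    ultimately show "\<theta> \<in> (\<Union>j<?n. (\<lambda>\<sigma>. (\<sigma> + real j) / real ?n) ` ?S j)" using jn by blast
  qed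
  moreover have "finite (\<Union>j<?n. (\<lambda>\<sigma>. (\<sigma> + real j) / real ?n) ` ?S j)"
    using oe_fin[OF T] by auto
  ultimately show ?thesis using finite_subset by blast
qed

lemma cel_preimage_closed:
  assumes T: "inj_on vert T"
  shows "closed {z \<in> cball 0 1. canon Rl (Cel g r z) \<in> T}"
proof -
  let ?A = "{z. Cel g r z \<in> T}"
  let ?B = "{z \<in> sphere 0 1. attach Rl g r (bparam z) \<in> T}"
  have eq: "{z \<in> cball 0 1. canon Rl (Cel g r z) \<in> T} = (?A \<inter> cball 0 1 - sphere 0 1) \<union> ?B"
    by (auto simp: canon.simps)
  have cA: "closed (?A \<inter> cball 0 1 - sphere 0 1)"
    using cel_subsing[OF T] by (intro finite_imp_closed) auto
  have cB: "closed ?B"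
  proof (cases "r = []")
    case True
    have "{z::complex. cmod z = 1} = sphere 0 1" by auto
    then have "closed {z::complex. cmod z = 1}" by simp
    with True show ?thesis
      by (cases "Vtx g \<in> T") (simp_all add: attach_def)
  next
    case False
    let ?Th = "{\<theta> \<in> {0..<1}. attach Rl g r \<theta> \<in> T}"
    have "?B \<subseteq> bparam -` ?Th \<inter> sphere 0 1" using bparam_range by auto
    moreover have "finite (bparam -` ?Th \<inter> sphere 0 1)"
      by (rule finite_vimage_IntI[OF attach_fin[OF T False] bparam_inj])
    ultimately show ?thesis using finite_subset finite_imp_closed by blast
  qed
  show ?thesis unfolding eq using cA cB by (rule closed_Un)
qed

lemma edg_preimage_closed:
  assumes T: "inj_on vert T"
  shows "closed {s \<in> {0..1}. canon Rl (Edg g x s) \<in> T}"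
proof -
  have "finite {s \<in> {0..1}. canon Rl (Edg g x s) \<in> T}"
    using canon_edge_fin[OF T, of Rl g x] by (auto simp: canon.simps intro: finite_subset)
  then show ?thesis by (rule finite_imp_closed)
qed

lemma openin_diff_closed: "closed F \<Longrightarrow> openin (top_of_set S) (S - F)"
proof -
  assume "closed F"
  then have "openin (top_of_set S) (S \<inter> - F)" by (intro openin_open_Int) (simp add: open_Compl)
  then show ?thesis by (simp add: Diff_eq)
qed

lemma inj_vert_closedin:
  assumes T: "T \<subseteq> topspace (cayley_top \<A> Rl)" "inj_on vert T"
  shows "closedin (cayley_top \<A> Rl) T"
  unfolding closedin_def
proof (intro conjI)
  show "T \<subseteq> topspace (cayley_top \<A> Rl)" by (rule T(1))
  let ?V = "topspace (cayley_top \<A> Rl) - T"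
  have e: "{s \<in> {0..1}. canon Rl (Edg g x s) \<in> ?V} = {0..1} - {s \<in> {0..1}. canon Rl (Edg g x s) \<in> T}"
    if "g \<in> grp_carrier \<A> Rl" "x \<in> gens \<A>" for g x
    using edg_in_carrier[OF that] by (auto simp: topspace_cayley simp del: canon.simps)
  have c: "{z \<in> cball 0 1. canon Rl (Cel g r z) \<in> ?V} = cball 0 1 - {z \<in> cball 0 1. canon Rl (Cel g r z) \<in> T}"
    if "g \<in> grp_carrier \<A> Rl" "r \<in> Rl" for g r
    using cel_in_carrier[OF that] by (auto simp: topspace_cayley simp del: canon.simps)
  show "openin (cayley_top \<A> Rl) ?V"
    unfolding openin_cayley ctop_pred_def
    using e c openin_diff_closed[OF edg_preimage_closed[OF T(2)]]
      openin_diff_closed[OF cel_preimage_closed[OF T(2)]]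
    by (auto simp: topspace_cayley)
qed

lemma compact_vert_finite:
  assumes K: "compactin (cayley_top \<A> Rl) K"
  shows "finite (vert ` K)"
proof (rule ccontr)
  assume inf: "infinite (vert ` K)"
  define ch where "ch = (\<lambda>g. SOME p. p \<in> K \<and> vert p = g)"
  have ch: "ch g \<in> K \<and> vert (ch g) = g" if "g \<in> vert ` K" for g
    unfolding ch_def using that by (rule imageE) (rule someI, blast)
  define S where "S = ch ` (vert ` K)"
  have SK: "S \<subseteq> K" using ch by (auto simp: S_def)
  have Ktop: "K \<subseteq> topspace (cayley_top \<A> Rl)" using K by (rule compactin_subset_topspace)
  have injS: "inj_on vert S" by (auto simp: S_def inj_on_def ch)
  have injch: "inj_on ch (vert ` K)" by (metis ch inj_onI)
  have infS: "infinite S" using inf injch by (simp add: S_def finite_image_iff)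
  have cl: "closedin (cayley_top \<A> Rl) T" if "T \<subseteq> S" for T
    using that SK Ktop injS by (intro inj_vert_closedin) (auto intro: inj_on_subset)
  have cS: "compactin (cayley_top \<A> Rl) S" by (rule closed_compactin[OF K SK cl]) simp
  let ?U = "(\<lambda>p. topspace (cayley_top \<A> Rl) - (S - {p})) ` S"
  have "\<exists>F. finite F \<and> F \<subseteq> ?U \<and> S \<subseteq> \<Union>F"
    using cS unfolding compactin_def
  proof (elim conjE allE impE)
    show "(\<forall>U\<in>?U. openin (cayley_top \<A> Rl) U) \<and> S \<subseteq> \<Union>?U"
      using cl SK Ktop by auto
  qed blast
  then obtain F where F: "finite F" "F \<subseteq> ?U" "S \<subseteq> \<Union>F" by blast
  then obtain S0 where S0: "S0 \<subseteq> S" "finite S0" "F = (\<lambda>p. topspace (cayley_top \<A> Rl) - (S - {p})) ` S0"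
    by (meson finite_subset_image)
  have "S \<subseteq> S0"
  proof
    fix x assume x: "x \<in> S"
    then obtain p where "p \<in> S0" "x \<in> topspace (cayley_top \<A> Rl) - (S - {p})"
      using F(3) S0(3) by blast
    then show "x \<in> S0" using x by auto
  qed
  then show False using infS S0(2) finite_subset by blast
qed


declare canon.simps[simp del]

definition tl_shape :: "'a word \<Rightarrow> 'a word \<Rightarrow> bool" where
  "tl_shape W y \<longleftrightarrow> y = [] \<or> (\<exists>j<length W. y \<in> {take j W, take j W @ [W ! j], take j W @ [W ! j, (fst (W ! j), False)]})"

lemma vert_canon_edge: "vert (canon_edge Rl h x s) \<in> {h, gmul Rl h (x, False)}"
  by (simp add: canon_edge_def)

lemma vert_oe: "vert (oe_pt Rl (vcls Rl w, l) \<sigma>) \<in> (\<lambda>y. vcls Rl (w @ y)) ` {[], [l], [l, (fst l, False)]}"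
proof (cases "snd l")
  case True
  have "oe_pt Rl (vcls Rl w, l) \<sigma> = canon_edge Rl (gmul Rl (vcls Rl w) l) (fst l) (1 - \<sigma>)"
    using True by (simp add: oe_pt_def)
  then show ?thesis using vert_canon_edge[of Rl "gmul Rl (vcls Rl w) l" "fst l" "1 - \<sigma>"]
    by (auto simp: gmul_vcls)
next
  case False
  then have l: "(fst l, False) = l" by (cases l) auto
  have "oe_pt Rl (vcls Rl w, l) \<sigma> = canon_edge Rl (vcls Rl w) (fst l) \<sigma>"
    using False by (simp add: oe_pt_def)
  then show ?thesis using vert_canon_edge[of Rl "vcls Rl w" "fst l" \<sigma>] l
    by (auto simp: gmul_vcls intro: image_eqI[where x="[]"])
qed

lemma vert_word_path: "vert (word_path Rl (vcls Rl w) W t) \<in> (\<lambda>y. vcls Rl (w @ y)) ` {y. tl_shape W y}"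
proof (cases "W = []")
  case True
  then show ?thesis by (auto simp: word_path_def tl_shape_def intro: image_eqI[where x="[]"])
next
  case False
  define j where "j = min (nat \<lfloor>real (length W) * t\<rfloor>) (length W - 1)"
  have "length W - 1 < length W" using False by simp
  then have j: "j < length W" unfolding j_def using min.cobounded2 le_less_trans by blast
  have "word_path Rl (vcls Rl w) W t = oe_pt Rl (vcls Rl (w @ take j W), W ! j) (real (length W) * t - real j)"
    using False by (simp add: word_path_def Let_def j_def gmulw_vcls)
  then have "vert (word_path Rl (vcls Rl w) W t) \<in> (\<lambda>y. vcls Rl ((w @ take j W) @ y)) ` {[], [W ! j], [W ! j, (fst (W ! j), False)]}"
    using vert_oe by metis
  then show ?thesis using j unfolding tl_shape_def by auto
qed

lemma vert_closed_cell:
  assumes "p \<in> closed_cell Rl (vcls Rl w) r"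
  shows "vert p \<in> (\<lambda>y. vcls Rl (w @ y)) ` {y. tl_shape r y}"
proof -
  obtain z where z: "norm z \<le> 1" "p = canon Rl (Cel (vcls Rl w) r z)"
    using assms by (auto simp: closed_cell_def)
  show ?thesis
  proof (cases "norm z = 1")
    case False
    then show ?thesis using z by (auto simp: canon.simps tl_shape_def intro: image_eqI[where x="[]"])
  next
    case True
    then have p: "p = attach Rl (vcls Rl w) r (bparam z)" using z by (simp add: canon.simps)
    show ?thesis
    proof (cases "r = []")
      case True
      then show ?thesis using p by (auto simp: attach_def tl_shape_def intro: image_eqI[where x="[]"])
    next
      case False
      define x where "x = real (length r) * bparam z"
      define j where "j = nat \<lfloor>x\<rfloor>"
      have x0: "0 \<le> x" using bparam_range[of z] by (simp add: x_def)
      have "x < real (length r)" using bparam_range[of z] False by (simp add: x_def)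
      then have j: "j < length r" unfolding j_def using x0 by linarith
      have "p = oe_pt Rl (vcls Rl (w @ take j r), r ! j) (x - real j)"
        using p False by (simp add: attach_def Let_def x_def j_def gmulw_vcls)
      then have "vert p \<in> (\<lambda>y. vcls Rl ((w @ take j r) @ y)) ` {[], [r ! j], [r ! j, (fst (r ! j), False)]}"
        using vert_oe by metis
      then show ?thesis using j unfolding tl_shape_def by auto
    qed
  qed
qed

lemma tl_shape_length: "tl_shape W y \<Longrightarrow> length y \<le> length W + 1"
  unfolding tl_shape_def by auto

lemma tl_shape_set: assumes "tl_shape W y" "set W \<subseteq> G \<times> UNIV" shows "set y \<subseteq> G \<times> UNIV"
proof -
  have tk: "set (take j W) \<subseteq> G \<times> UNIV" for j using assms(2) by (rule order_trans[OF set_take_subset])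
  show ?thesis using assms(1) unfolding tl_shape_def
  proof (elim disjE exE conjE)
    fix j assume j: "j < length W" and y: "y \<in> {take j W, take j W @ [W ! j], take j W @ [W ! j, (fst (W ! j), False)]}"
    have wj: "W ! j \<in> G \<times> UNIV" using nth_mem[OF j] by (rule subsetD[rotated, OF _ assms(2)])
    then have m: "fst (W ! j) \<in> G" by (simp add: mem_Times_iff)
    have s: "set y \<subseteq> set (take j W) \<union> {W ! j, (fst (W ! j), False)}" using y by auto
    have "(fst (W ! j), False) \<in> G \<times> UNIV" using m by simp
    then have "{W ! j, (fst (W ! j), False)} \<subseteq> G \<times> UNIV" using wj by simp
    then show ?thesis using s tk[of j] by (meson Un_least order_trans)
  qed simp
qed

lemma tl_shape_tdeg: "tl_shape W y \<Longrightarrow> (\<And>j. tdeg (take j W) \<ge> c) \<Longrightarrow> c \<le> 0 \<Longrightarrow> tdeg y \<ge> c - 2"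
  unfolding tl_shape_def
proof (elim disjE exE conjE)
  fix j assume c0: "c \<le> 0" and hyp: "\<And>j. c \<le> tdeg (take j W)" and y: "y \<in> {take j W, take j W @ [W ! j], take j W @ [W ! j, (fst (W ! j), False)]}"
  have h: "c \<le> tdeg (take j W)" by (rule hyp)
  show "c - 2 \<le> tdeg y" using y h by auto
qed simp

definition Cphi :: "'a set \<Rightarrow> ('a \<Rightarrow> 'a word) \<Rightarrow> nat" where
  "Cphi \<A> \<phi> = Max (insert 0 ((\<lambda>a. length (\<phi> a)) ` \<A>))"
definition Mk :: "'a set \<Rightarrow> ('a \<Rightarrow> 'a word) \<Rightarrow> nat \<Rightarrow> nat" where
  "Mk \<A> \<phi> k = Max (insert 0 ((\<lambda>l. length (phi_pow \<phi> k [l])) ` (Some ` \<A> \<times> UNIV)))"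
definition Lb :: "'a set \<Rightarrow> ('a \<Rightarrow> 'a word) \<Rightarrow> nat \<Rightarrow> nat" where
  "Lb \<A> \<phi> k = 2 * k + 20 + Cphi \<A> \<phi> + Mk \<A> \<phi> k + Mk \<A> \<phi> (Suc k)"
definition Uw :: "'a set \<Rightarrow> ('a \<Rightarrow> 'a word) \<Rightarrow> nat \<Rightarrow> 'a word set" where
  "Uw \<A> \<phi> k = {u. length u \<le> Lb \<A> \<phi> k \<and> set u \<subseteq> gens \<A> \<times> UNIV \<and> int k \<le> tdeg u + 4}"

lemma finite_gens: "finite \<A> \<Longrightarrow> finite (gens \<A>)"
  by (simp add: gens_def)

lemma finite_Uw: "finite \<A> \<Longrightarrow> finite (Uw \<A> \<phi> k)"
proof -
  assume "finite \<A>"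
  then have "finite (gens \<A> \<times> (UNIV :: bool set))" by (simp add: finite_gens)
  then have "finite {xs. set xs \<subseteq> gens \<A> \<times> (UNIV :: bool set) \<and> length xs \<le> Lb \<A> \<phi> k}"
    using finite_lists_length_le by blast
  then show ?thesis by (rule finite_subset[rotated]) (auto simp: Uw_def)
qed

lemma Cphi_ge: "finite \<A> \<Longrightarrow> a \<in> \<A> \<Longrightarrow> length (\<phi> a) \<le> Cphi \<A> \<phi>"
  unfolding Cphi_def by (rule Max_ge) auto

lemma Mk_ge: "finite \<A> \<Longrightarrow> fst l \<in> Some ` \<A> \<Longrightarrow> length (phi_pow \<phi> k [l]) \<le> Mk \<A> \<phi> k"
  unfolding Mk_def
proof (rule Max_ge)
  assume "finite \<A>" "fst l \<in> Some ` \<A>"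
  then show "finite (insert 0 ((\<lambda>l. length (phi_pow \<phi> k [l])) ` (Some ` \<A> \<times> UNIV)))" by simp
  have "l \<in> Some ` \<A> \<times> UNIV" using \<open>fst l \<in> Some ` \<A>\<close> by (cases l) auto
  then show "length (phi_pow \<phi> k [l]) \<in> insert 0 ((\<lambda>l. length (phi_pow \<phi> k [l])) ` (Some ` \<A> \<times> UNIV))" by blast
qed

lemma set_free_red: "set (free_red w) \<subseteq> set w"
  by (induction w) (auto split: list.splits if_splits)

lemma set_inv_word: "set (inv_word w) = inv_letter ` set w"
  by (simp add: inv_word_def)

lemma fst_inv_letter[simp]: "fst (inv_letter l) = fst l"
  by (simp add: inv_letter_def)

lemma phi_word_set:
  assumes phiA: "\<forall>a\<in>\<A>. A_word \<A> (\<phi> a)" and w: "set w \<subseteq> Some ` \<A> \<times> UNIV"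
  shows "set (phi_word \<phi> w) \<subseteq> Some ` \<A> \<times> UNIV"
proof -
  have "set (phi_letter \<phi> l) \<subseteq> Some ` \<A> \<times> UNIV" if lw: "l \<in> set w" for l
  proof -
    obtain a b where l: "l = (Some a, b)" "a \<in> \<A>" using w lw by (cases l) auto
    have "\<forall>m\<in>set (\<phi> a). fst m \<in> Some ` \<A>" using phiA l(2) by (simp add: A_word_def)
    then show ?thesis using l by (auto simp: phi_letter_def set_inv_word mem_Times_iff inv_letter_def)
  qed
  then have "set (concat (map (phi_letter \<phi>) w)) \<subseteq> Some ` \<A> \<times> UNIV" by auto
  then show ?thesis unfolding phi_word_def using set_free_red by blast
qed

lemma phi_pow_set:
  assumes phiA: "\<forall>a\<in>\<A>. A_word \<A> (\<phi> a)" and w: "set w \<subseteq> Some ` \<A> \<times> UNIV"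
  shows "set (phi_pow \<phi> k w) \<subseteq> Some ` \<A> \<times> UNIV"
  unfolding phi_pow_def
proof (induction k)
  case 0 then show ?case using w by simp
next
  case (Suc k) then show ?case using phi_word_set[OF phiA] by simp
qed

lemma tdeg_noNone': "set w \<subseteq> Some ` \<A> \<times> UNIV \<Longrightarrow> tdeg w = 0"
  by (rule tdeg_noNone) auto

lemma tdeg_tpow[simp]: "tdeg (tpow k) = int k"
  by (induction k) (simp_all add: tpow_def)

lemma set_tpow: "set (tpow k) \<subseteq> {(None, False)}"
  by (induction k) (simp_all add: tpow_def)

lemma length_tpow[simp]: "length (tpow k) = k"
  by (simp add: tpow_def)

lemma conj_rel_facts:
  assumes phiA: "\<forall>a\<in>\<A>. A_word \<A> (\<phi> a)" and fin: "finite \<A>" and a: "a \<in> \<A>"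
  shows "set (conj_rel \<phi> a) \<subseteq> gens \<A> \<times> UNIV" "length (conj_rel \<phi> a) \<le> 3 + Cphi \<A> \<phi>"
    "\<And>j. tdeg (take j (conj_rel \<phi> a)) \<ge> -1"
proof -
  have s: "set (\<phi> a) \<subseteq> Some ` \<A> \<times> UNIV"
  proof
    fix m assume "m \<in> set (\<phi> a)"
    then have "fst m \<in> Some ` \<A>" using phiA a by (auto simp: A_word_def)
    then show "m \<in> Some ` \<A> \<times> UNIV" by (cases m) auto
  qed
  then have si: "set (inv_word (\<phi> a)) \<subseteq> Some ` \<A> \<times> UNIV" by (auto simp: set_inv_word mem_Times_iff inv_letter_def)
  then show "set (conj_rel \<phi> a) \<subseteq> gens \<A> \<times> UNIV" using a by (auto simp: conj_rel_def gens_def)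
  show "length (conj_rel \<phi> a) \<le> 3 + Cphi \<A> \<phi>" using Cphi_ge[OF fin a, of \<phi>]
    by (simp add: conj_rel_def inv_word_def)
  fix j
  have t0: "tdeg (take i (inv_word (\<phi> a))) = 0" for i
    by (rule tdeg_noNone'[of _ \<A>], rule order_trans[OF set_take_subset si])
  show "tdeg (take j (conj_rel \<phi> a)) \<ge> -1"
  proof (cases "j \<le> 3")
    case True
    then have "j = 0 \<or> j = 1 \<or> j = 2 \<or> j = 3" by auto
    then show ?thesis by (auto simp: conj_rel_def)
  next
    case False
    define i where "i = j - 3"
    have j: "j = Suc (Suc (Suc i))" using False by (simp add: i_def)
    then have "take j (conj_rel \<phi> a) = [(None, True), (Some a, False), (None, False)] @ take (j - 3) (inv_word (\<phi> a))"
      by (simp add: conj_rel_def j)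
    then show ?thesis using t0 by simp
  qed
qed

lemma UwI: "length u \<le> Lb \<A> \<phi> k \<Longrightarrow> set u \<subseteq> gens \<A> \<times> UNIV \<Longrightarrow> int k \<le> tdeg u + 4 \<Longrightarrow> u \<in> Uw \<A> \<phi> k"
  by (simp add: Uw_def)

lemma strip_vert:
  assumes fin: "finite \<A>" and phiA: "\<forall>a\<in>\<A>. A_word \<A> (\<phi> a)" and l: "fst l \<in> Some ` \<A>"
    and p: "p \<in> strip Rl \<phi> (vcls Rl w0, l) k"
  shows "\<exists>u \<in> Uw \<A> \<phi> k. vert p = vcls Rl (w0 @ u)"
proof -
  define W where "W = phi_pow \<phi> k [l]"
  define W' where "W' = phi_pow \<phi> (Suc k) [l]"
  have l1: "set [l] \<subseteq> Some ` \<A> \<times> UNIV" using l by (cases l) auto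
  have WS: "set W \<subseteq> Some ` \<A> \<times> UNIV" unfolding W_def by (rule phi_pow_set[OF phiA l1])
  have W'S: "set W' \<subseteq> Some ` \<A> \<times> UNIV" unfolding W'_def by (rule phi_pow_set[OF phiA l1])
  have WL: "length W \<le> Mk \<A> \<phi> k" unfolding W_def by (rule Mk_ge[OF fin l])
  have W'L: "length W' \<le> Mk \<A> \<phi> (Suc k)" unfolding W'_def by (rule Mk_ge[OF fin l])
  have Wt: "tdeg (take j W) = 0" for j
    by (rule tdeg_noNone'[of _ \<A>], rule order_trans[OF set_take_subset WS])
  have W't: "tdeg (take j W') = 0" for j
    by (rule tdeg_noNone'[of _ \<A>], rule order_trans[OF set_take_subset W'S])
  have SA: "Some ` \<A> \<times> UNIV \<subseteq> gens \<A> \<times> (UNIV::bool set)" by (auto simp: gens_def)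
  have tS: "(None, False) \<in> gens \<A> \<times> (UNIV::bool set)" by (simp add: gens_def)
  have tpS: "set (tpow n) \<subseteq> gens \<A> \<times> UNIV" for n using set_tpow tS by blast
  have lS: "l \<in> gens \<A> \<times> UNIV" using l1 SA by auto
  have lt: "tdeg [l] = 0" using l by auto
  have Lb: "Lb \<A> \<phi> k = 2 * k + 20 + Cphi \<A> \<phi> + Mk \<A> \<phi> k + Mk \<A> \<phi> (Suc k)" by (simp add: Lb_def)
  have sh3: "y \<in> {[], [(None, False)], [(None, False), (fst (None :: 'a option, False), False)]} \<Longrightarrow>
      length y \<le> 2 \<and> set y \<subseteq> gens \<A> \<times> UNIV \<and> tdeg y \<ge> 0" for y
    using tS by auto
  from p consider
      (cell) j where "j < length W" "p \<in> closed_cell Rl (gmul Rl (if snd (W ! j) then gmul Rl (gmulw Rl (gmulw Rl (vcls Rl w0) (tpow k)) (take j W)) (W ! j) else gmulw Rl (gmulw Rl (vcls Rl w0) (tpow k)) (take j W)) (None, False)) (conj_rel \<phi> (the (fst (W ! j))))"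
    | (te1) y where "p = oe_pt Rl (gmulw Rl (vcls Rl w0) (tpow k), (None, False)) y"
    | (te2) y where "p = oe_pt Rl (gmulw Rl (gmul Rl (vcls Rl w0) l) (tpow k), (None, False)) y"
    | (wp1) x where "p = word_path Rl (gmulw Rl (vcls Rl w0) (tpow k)) W x"
    | (wp2) x where "p = word_path Rl (gmulw Rl (vcls Rl w0) (tpow (Suc k))) W' x"
    unfolding strip_def Let_def W_def W'_def fst_conv snd_conv by blast
  then show ?thesis
  proof cases
    case cell
    define m where "m = W ! j"
    have mW: "m \<in> set W" using cell(1) by (simp add: m_def)
    then obtain a b where ab: "m = (Some a, b)" "a \<in> \<A>" using WS by auto
    define mm where "mm = (if snd m then [m] else [])"
    define X where "X = tpow k @ take j W @ mm @ [(None, False)]"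
    have h: "gmul Rl (if snd (W ! j) then gmul Rl (gmulw Rl (gmulw Rl (vcls Rl w0) (tpow k)) (take j W)) (W ! j) else gmulw Rl (gmulw Rl (vcls Rl w0) (tpow k)) (take j W)) (None, False)
       = vcls Rl (w0 @ X)"
      by (cases "snd m") (simp_all add: X_def mm_def m_def gmulw_vcls gmul_vcls)
    have ra: "the (fst (W ! j)) = a" using ab by (simp add: m_def[symmetric])
    let ?r = "conj_rel \<phi> a"
    obtain y where y: "tl_shape ?r y" "vert p = vcls Rl ((w0 @ X) @ y)"
      using vert_closed_cell[of p Rl "w0 @ X" ?r] cell(2) h ra by auto
    note cr = conj_rel_facts[OF phiA fin ab(2)]
    have ylen: "length y \<le> 4 + Cphi \<A> \<phi>" using tl_shape_length[OF y(1)] cr(2) by simp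
    have yset: "set y \<subseteq> gens \<A> \<times> UNIV" by (rule tl_shape_set[OF y(1) cr(1)])
    have ytd: "tdeg y \<ge> -3" using tl_shape_tdeg[OF y(1), of "-1"] cr(3) by simp
    have mmS: "set mm \<subseteq> gens \<A> \<times> UNIV" "length mm \<le> 1" "tdeg mm = 0"
      using ab mW WS SA by (auto simp: mm_def)
    have tkS: "set (take j W) \<subseteq> gens \<A> \<times> UNIV" using WS SA set_take_subset by (meson order_trans)
    have "X @ y \<in> Uw \<A> \<phi> k"
    proof (rule UwI)
      have "length (take j W) \<le> Mk \<A> \<phi> k" using WL by simp
      then show "length (X @ y) \<le> Lb \<A> \<phi> k" using ylen mmS(2) by (simp add: X_def Lb)
      show "set (X @ y) \<subseteq> gens \<A> \<times> UNIV" using tpS[of k] tkS mmS(1) tS yset by (simp add: X_def)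
      show "int k \<le> tdeg (X @ y) + 4" using ytd mmS(3) Wt[of j] by (simp add: X_def)
    qed
    then show ?thesis using y(2) by (intro bexI[of _ "X @ y"]) simp_all
  next
    case te1
    then have "vert p \<in> (\<lambda>y. vcls Rl ((w0 @ tpow k) @ y)) ` {[], [(None, False)], [(None, False), (fst (None :: 'a option, False), False)]}"
      using vert_oe[of Rl "w0 @ tpow k" "(None, False)" y] by (simp add: gmulw_vcls)
    then obtain y' where y': "y' \<in> {[], [(None, False)], [(None, False), (fst (None :: 'a option, False), False)]}" "vert p = vcls Rl ((w0 @ tpow k) @ y')"
      by blast
    have "tpow k @ y' \<in> Uw \<A> \<phi> k"
      using sh3[OF y'(1)] tpS[of k] by (intro UwI) (auto simp: Lb)
    then show ?thesis using y'(2) by (intro bexI[of _ "tpow k @ y'"]) simp_all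
  next
    case te2
    then have "vert p \<in> (\<lambda>y. vcls Rl ((w0 @ [l] @ tpow k) @ y)) ` {[], [(None, False)], [(None, False), (fst (None :: 'a option, False), False)]}"
      using vert_oe[of Rl "w0 @ [l] @ tpow k" "(None, False)" y] by (simp add: gmulw_vcls gmul_vcls)
    then obtain y' where y': "y' \<in> {[], [(None, False)], [(None, False), (fst (None :: 'a option, False), False)]}" "vert p = vcls Rl ((w0 @ [l] @ tpow k) @ y')"
      by blast
    have "[l] @ tpow k @ y' \<in> Uw \<A> \<phi> k"
      using sh3[OF y'(1)] tpS[of k] lS lt by (intro UwI) (auto simp: Lb)
    then show ?thesis using y'(2) by (intro bexI[of _ "[l] @ tpow k @ y'"]) simp_all
  next
    case wp1
    then have "vert p \<in> (\<lambda>y. vcls Rl ((w0 @ tpow k) @ y)) ` {y. tl_shape W y}"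
      using vert_word_path[of Rl "w0 @ tpow k" W x] by (simp add: gmulw_vcls)
    then obtain y where y: "tl_shape W y" "vert p = vcls Rl ((w0 @ tpow k) @ y)" by blast
    have "tpow k @ y \<in> Uw \<A> \<phi> k"
    proof (rule UwI)
      show "length (tpow k @ y) \<le> Lb \<A> \<phi> k" using tl_shape_length[OF y(1)] WL by (simp add: Lb)
      show "set (tpow k @ y) \<subseteq> gens \<A> \<times> UNIV" using tpS[of k] tl_shape_set[OF y(1) order_trans[OF WS SA]] by simp
      show "int k \<le> tdeg (tpow k @ y) + 4" using tl_shape_tdeg[OF y(1), of 0] Wt by simp
    qed
    then show ?thesis using y(2) by (intro bexI[of _ "tpow k @ y"]) simp_all
  next
    case wp2
    then have "vert p \<in> (\<lambda>y. vcls Rl ((w0 @ tpow (Suc k)) @ y)) ` {y. tl_shape W' y}"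
      using vert_word_path[of Rl "w0 @ tpow (Suc k)" W' x] by (simp add: gmulw_vcls)
    then obtain y where y: "tl_shape W' y" "vert p = vcls Rl ((w0 @ tpow (Suc k)) @ y)" by blast
    have "tpow (Suc k) @ y \<in> Uw \<A> \<phi> k"
    proof (rule UwI)
      show "length (tpow (Suc k) @ y) \<le> Lb \<A> \<phi> k" using tl_shape_length[OF y(1)] W'L by (simp add: Lb)
      show "set (tpow (Suc k) @ y) \<subseteq> gens \<A> \<times> UNIV" using tpS[of "Suc k"] tl_shape_set[OF y(1) order_trans[OF W'S SA]] by simp
      show "int k \<le> tdeg (tpow (Suc k) @ y) + 4" using tl_shape_tdeg[OF y(1), of 0] W't by simp
    qed
    then show ?thesis using y(2) by (intro bexI[of _ "tpow (Suc k) @ y"]) simp_all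
  qed
qed


declare canon.simps[simp del]

lemma rels_tdeg:
  assumes "\<forall>r\<in>R. A_word \<A> r" and "\<forall>a\<in>\<A>. A_word \<A> (\<phi> a)"
  shows "\<forall>r\<in>rels \<A> R \<phi>. tdeg r = 0"
proof
  fix r assume "r \<in> rels \<A> R \<phi>"
  then consider "r \<in> R" | a where "a \<in> \<A>" "r = conj_rel \<phi> a" by (auto simp: rels_def)
  then show "tdeg r = 0"
  proof cases
    case 1 then show ?thesis using assms(1) by (intro tdeg_noNone) (auto simp: A_word_def)
  next
    case 2
    have "tdeg (\<phi> a) = 0" using assms(2) 2(1) by (intro tdeg_noNone) (auto simp: A_word_def)
    then show ?thesis using 2(2) by (simp add: conj_rel_def)
  qed
qed

lemma subgrp_A_vcls:
  "g \<in> subgrp_A \<A> Rl \<Longrightarrow> \<exists>w. g = vcls Rl w \<and> set w \<subseteq> Some ` \<A> \<times> UNIV"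
proof -
  assume "g \<in> subgrp_A \<A> Rl"
  then obtain w where w: "g = vcls Rl w" "\<forall>l\<in>set w. fst l \<in> Some ` \<A>" by (auto simp: subgrp_A_def)
  have "set w \<subseteq> Some ` \<A> \<times> UNIV"
  proof
    fix l assume "l \<in> set w"
    then have "fst l \<in> Some ` \<A>" using w(2) by blast
    then show "l \<in> Some ` \<A> \<times> UNIV" by (cases l) auto
  qed
  then show ?thesis using w(1) by blast
qed

lemma subgrp_A_carrier: "subgrp_A \<A> Rl \<subseteq> grp_carrier \<A> Rl"
  by (auto simp: subgrp_A_def grp_carrier_def gens_def)

lemma finite_visits:
  assumes ray: "edge_path_ray_in_Lambda \<A> Rl s" and pr: "proper_ray \<A> Rl s"
  shows "finite {n. fst (s n) = f}"
proof (cases "\<exists>n. fst (s n) = f")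
  case False then show ?thesis by simp
next
  case True
  then obtain n0 where n0: "fst (s n0) = f" by blast
  have fA: "f \<in> subgrp_A \<A> Rl" using ray n0 by (auto simp: edge_path_ray_in_Lambda_def)
  then have "Vtx f \<in> cells_carrier \<A> Rl" using subgrp_A_carrier by (auto simp: cells_carrier_def)
  then have "Vtx f \<in> topspace (cayley_top \<A> Rl)"
    by (auto simp: topspace_cayley canon.simps intro: image_eqI[where x="Vtx f"])
  then have "compactin (cayley_top \<A> Rl) {Vtx f}" by simp
  then have "compactin (top_of_set {0..}) {y \<in> {0::real..}. ray_map Rl s y \<in> {Vtx f}}"
    using pr unfolding proper_ray_def by blast
  then have "compact {y \<in> {0::real..}. ray_map Rl s y \<in> {Vtx f}}"
    by (simp add: compactin_subtopology)
  then have "bounded {y \<in> {0::real..}. ray_map Rl s y \<in> {Vtx f}}" by (rule compact_imp_bounded)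
  then obtain B where B0: "\<forall>y \<in> {y \<in> {0::real..}. ray_map Rl s y \<in> {Vtx f}}. \<bar>y\<bar> \<le> B"
    unfolding bounded_real by blast
  have B: "y \<le> B" if "y \<in> {y \<in> {0::real..}. ray_map Rl s y \<in> {Vtx f}}" for y
    using B0 that by fastforce
  have "real n \<le> B" if "fst (s n) = f" for n
  proof (rule B)
    have "fst (s n) \<in> subgrp_A \<A> Rl" using ray by (simp add: edge_path_ray_in_Lambda_def)
    then obtain w where w: "fst (s n) = vcls Rl w" using subgrp_A_vcls by blast
    have "ray_map Rl s (real n) = oe_pt Rl (s n) 0" by (simp add: ray_map_def)
    also have "\<dots> = Vtx (fst (s n))" using w oe_pt_0[of Rl w "snd (s n)"] by (metis prod.collapse)
    finally show "real n \<in> {y \<in> {0::real..}. ray_map Rl s y \<in> {Vtx f}}" using that by simp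
  qed
  have "n \<le> nat \<lceil>B\<rceil>" if "fst (s n) = f" for n
  proof -
    have "real n \<le> B" using that \<open>\<And>n. fst (s n) = f \<Longrightarrow> real n \<le> B\<close> by blast
    then have "real n \<le> real (nat \<lceil>B\<rceil>)" by linarith
    then show ?thesis by simp
  qed
  then have "{n. fst (s n) = f} \<subseteq> {..nat \<lceil>B\<rceil>}" by auto
  then show ?thesis using finite_subset by blast
qed


declare canon.simps[simp del]

lemma overlap_cases:
  fixes a :: real
  assumes "i \<noteq> j" "real i \<le> a" "a \<le> real i + 1" "real j \<le> a" "a \<le> real j + 1"
  shows "(j = Suc i \<and> a = real j) \<or> (i = Suc j \<and> a = real i)"
proof (cases "i < j")
  case True
  then have "real i + 1 \<le> real j" by simp
  then have "a = real j" using assms by linarith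
  moreover have "j = Suc i" using assms \<open>a = real j\<close> True by linarith
  ultimately show ?thesis by simp
next
  case False
  then have "j < i" using assms(1) by simp
  then have "real j + 1 \<le> real i" by simp
  then have "a = real i" using assms by linarith
  moreover have "i = Suc j" using assms \<open>a = real i\<close> \<open>j < i\<close> by linarith
  ultimately show ?thesis by simp
qed

lemma finite_nat_le_real: "finite {n::nat. real n \<le> c}"
proof -
  have "{n::nat. real n \<le> c} \<subseteq> {..nat \<lceil>c\<rceil>}" by auto linarith
  then show ?thesis using finite_subset by blast
qed

theorem lemma3p3:
  fixes \<A> :: "'a set" and R :: "'a word set" and \<phi> :: "'a \<Rightarrow> 'a word"
    and s :: "nat \<Rightarrow> 'a grp \<times> 'a letter"
    and H :: "'a grp \<times> 'a letter \<Rightarrow> real \<times> real \<Rightarrow> 'a xpt"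
  assumes "finite \<A>"
    and "finite R" and "\<forall>r\<in>R. A_word \<A> r"
    and "\<forall>a\<in>\<A>. A_word \<A> (\<phi> a)"
    and "edge_path_ray_in_Lambda \<A> (rels \<A> R \<phi>) s"
    and "proper_ray \<A> (rels \<A> R \<phi>) s"
    and "\<forall>n. is_strip_map \<A> (rels \<A> R \<phi>) \<phi> (s n) (H (s n))"
  shows "let Rl = rels \<A> R \<phi>; X = cayley_top \<A> Rl; v = fst (s 0); Q = {0::real..} \<times> {0::real..} in
     continuous_map (top_of_set Q) X (Hs s H) \<and>
     (\<forall>K. compactin X K \<longrightarrow> compactin (top_of_set Q) {p \<in> Q. Hs s H p \<in> K}) \<and>
     (\<forall>x\<ge>0. Hs s H (x, 0) = ray_map Rl s x) \<and>
     (\<forall>y\<ge>0. Hs s H (0, y) = ray_map Rl (t_ray Rl v) y) \<and>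
     Hs s H (0, 0) = Vtx v"
proof -
  define Rl where "Rl = rels \<A> R \<phi>"
  define X where "X = cayley_top \<A> Rl"
  define v where "v = fst (s 0)"
  define Q where "Q = {0::real..} \<times> {0::real..}"
  note fin = assms(1) and phiA = assms(4)
  have ray: "edge_path_ray_in_Lambda \<A> Rl s" using assms(5) by (simp add: Rl_def)
  have pr: "proper_ray \<A> Rl s" using assms(6) by (simp add: Rl_def)
  have SM: "is_strip_map \<A> Rl \<phi> (s n) (H (s n))" for n using assms(7) by (simp add: Rl_def)
  have RA: "fst (s n) \<in> subgrp_A \<A> Rl" for n using ray by (simp add: edge_path_ray_in_Lambda_def)
  have RL: "fst (snd (s n)) \<in> Some ` \<A>" for n using ray by (simp add: edge_path_ray_in_Lambda_def)
  have RS: "fst (s (Suc n)) = gmul Rl (fst (s n)) (snd (s n))" for n using ray by (simp add: edge_path_ray_in_Lambda_def)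
  have RW: "\<exists>w. fst (s n) = vcls Rl w \<and> set w \<subseteq> Some ` \<A> \<times> UNIV" for n using subgrp_A_vcls[OF RA] by blast
  have SMc: "continuous_map (top_of_set ({0..1} \<times> {0..})) X (H (s n))" for n
    using SM[of n] by (simp add: is_strip_map_def Let_def X_def)
  have SMb: "H (s n) (x, real k) = word_path Rl (gmulw Rl (fst (s n)) (tpow k)) (phi_pow \<phi> k [snd (s n)]) x"
    if "x \<in> {0..1}" for n k x
    using SM[of n] that by (simp add: is_strip_map_def Let_def)
  have SMs: "H (s n) (0, y) = oe_pt Rl (gmulw Rl (fst (s n)) (tpow k), (None, False)) (y - real k) \<and>
     H (s n) (1, y) = oe_pt Rl (gmulw Rl (gmul Rl (fst (s n)) (snd (s n))) (tpow k), (None, False)) (y - real k)"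
    if "y \<in> {real k..real k + 1}" for n k y
    using SM[of n] that unfolding is_strip_map_def Let_def by blast
  have SMi: "H (s n) ` ({0..1} \<times> {real k..real k + 1}) = strip Rl \<phi> (s n) k" for n k
    using SM[of n] unfolding is_strip_map_def Let_def by blast
  have floor_nat: "of_int \<lfloor>x\<rfloor> = real (nat \<lfloor>x\<rfloor>)" if "0 \<le> x" for x :: real
    using that by simp
  have Hs_eq: "Hs s H (x, y) = H (s (nat \<lfloor>x\<rfloor>)) (x - real (nat \<lfloor>x\<rfloor>), y)" if "0 \<le> x" for x y
    using that by (simp add: Hs_def)
  have yk: "y \<in> {real (nat \<lfloor>y\<rfloor>)..real (nat \<lfloor>y\<rfloor>) + 1}" if "0 \<le> y" for y :: real
    using that by simp
  define T where "T = (\<lambda>n::nat. {real n..real n + 1} \<times> {0::real..})"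
  define f where "f = (\<lambda>n::nat. \<lambda>p::real \<times> real. H (s n) (fst p - real n, snd p))"
  have CONT: "continuous_map (top_of_set Q) X (Hs s H)"
  proof (rule pasting_lemma_locally_finite[where I=UNIV and T=T and f=f])
    fix p assume p: "p \<in> topspace (top_of_set Q)"
    show "\<exists>V. openin (top_of_set Q) V \<and> p \<in> V \<and> finite {i \<in> UNIV. T i \<inter> V \<noteq> {}}"
    proof (intro exI conjI)
      show "openin (top_of_set Q) (Q \<inter> ball p 1)" by (rule openin_open_Int) simp
      show "p \<in> Q \<inter> ball p 1" using p by simp
      have "{i \<in> UNIV. T i \<inter> (Q \<inter> ball p 1) \<noteq> {}} \<subseteq> {n. real n \<le> fst p + 1}"
      proof
        fix i assume "i \<in> {i \<in> UNIV. T i \<inter> (Q \<inter> ball p 1) \<noteq> {}}"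
        then obtain q where q: "q \<in> T i" "q \<in> Q \<inter> ball p 1" by blast
        have "dist (fst p) (fst q) \<le> dist p q" by (rule dist_fst_le)
        moreover have "dist p q < 1" using q(2) by simp
        ultimately have "fst q \<le> fst p + 1" by (simp add: dist_real_def)
        moreover have "real i \<le> fst q" using q(1) by (auto simp: T_def mem_Times_iff)
        ultimately show "i \<in> {n. real n \<le> fst p + 1}" by simp
      qed
      then show "finite {i \<in> UNIV. T i \<inter> (Q \<inter> ball p 1) \<noteq> {}}"
        using finite_nat_le_real finite_subset by blast
    qed
  next
    fix i :: nat
    have "T i \<subseteq> Q" by (auto simp: T_def Q_def)
    moreover have "closed (T i)" by (auto simp: T_def intro!: closed_Times)
    ultimately show "closedin (top_of_set Q) (T i)" by (metis closedin_closed inf.absorb_iff2)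
  next
    fix i :: nat
    have TQ: "T i \<subseteq> Q" by (auto simp: T_def Q_def)
    have "continuous_map (top_of_set (T i)) (top_of_set ({0..1} \<times> {0..})) (\<lambda>p. (fst p - real i, snd p))"
      by (auto simp: continuous_map_in_subtopology T_def intro!: continuous_intros)
    then have "continuous_map (top_of_set (T i)) X (H (s i) \<circ> (\<lambda>p. (fst p - real i, snd p)))"
      using SMc by (rule continuous_map_compose)
    then show "continuous_map (subtopology (top_of_set Q) (T i)) X (f i)"
      using TQ by (simp add: subtopology_subtopology inf.absorb2 f_def o_def)
  next
    fix i j :: nat and p assume ij: "i \<in> UNIV" "j \<in> UNIV" "p \<in> topspace (top_of_set Q) \<inter> T i \<inter> T j"
    obtain a b where p: "p = (a, b)" by (cases p)
    have ab: "real i \<le> a" "a \<le> real i + 1" "real j \<le> a" "a \<le> real j + 1" "0 \<le> b"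
      using ij(3) by (auto simp: p T_def)
    have key: "f m p = f (Suc m) p" if "a = real (Suc m)" for m
    proof -
      have "f m p = H (s m) (1, b)" using that by (simp add: f_def p)
      also have "\<dots> = oe_pt Rl (gmulw Rl (fst (s (Suc m))) (tpow (nat \<lfloor>b\<rfloor>)), (None, False)) (b - real (nat \<lfloor>b\<rfloor>))"
        using SMs[where k="nat \<lfloor>b\<rfloor>" and y=b and n=m] yk[OF ab(5)] RS[of m] by simp
      also have "\<dots> = H (s (Suc m)) (0, b)"
        using SMs[where k="nat \<lfloor>b\<rfloor>" and y=b and n="Suc m"] yk[OF ab(5)] by simp
      also have "\<dots> = f (Suc m) p" using that by (simp add: f_def p)
      finally show ?thesis .
    qed
    show "f i p = f j p"
    proof (cases "i = j")
      case False
      then consider "j = Suc i" "a = real j" | "i = Suc j" "a = real i"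
        using overlap_cases[OF False ab(1-4)] by blast
      then show ?thesis
      proof cases
        case 1 then show ?thesis using key[of i] by simp
      next
        case 2 then show ?thesis using key[of j] by simp
      qed
    qed simp
  next
    fix p assume p: "p \<in> topspace (top_of_set Q)"
    obtain a b where ab: "p = (a, b)" by (cases p)
    have a0: "0 \<le> a" "0 \<le> b" using p ab by (auto simp: Q_def)
    show "\<exists>j. j \<in> UNIV \<and> p \<in> T j \<and> Hs s H p = f j p"
    proof (intro exI conjI)
      show "p \<in> T (nat \<lfloor>a\<rfloor>)" using a0 by (simp add: ab T_def)
      show "Hs s H p = f (nat \<lfloor>a\<rfloor>) p" using Hs_eq[OF a0(1)] by (simp add: ab f_def)
    qed simp
  qed
  have PROP: "compactin (top_of_set Q) {p \<in> Q. Hs s H p \<in> K}" if K: "compactin X K" for K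
  proof -
    let ?P = "{p \<in> Q. Hs s H p \<in> K}"
    have Kc: "closedin X K" unfolding X_def by (rule compactin_imp_closedin[OF cayley_Hausdorff K[unfolded X_def]])
    have "closedin (top_of_set Q) {x \<in> topspace (top_of_set Q). Hs s H x \<in> K}"
      by (rule closedin_continuous_map_preimage[OF CONT Kc])
    then have "closedin (top_of_set Q) ?P" by simp
    moreover have "closed Q" by (simp add: Q_def closed_Times)
    ultimately have Pc: "closed ?P" by (rule closedin_closed_trans)
    define VK where "VK = vert ` K"
    have VKf: "finite VK" unfolding VK_def by (rule compact_vert_finite[OF K[unfolded X_def]])
    have TD: "\<forall>r\<in>Rl. tdeg r = 0" unfolding Rl_def by (rule rels_tdeg[OF assms(3) assms(4)])
    define kmax where "kmax = nat (Max (insert 0 (tdegg Rl ` VK)) + 4)"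
    define UU where "UU = (\<Union>k\<le>kmax. Uw \<A> \<phi> k)"
    have UUf: "finite UU" unfolding UU_def using finite_Uw[OF fin] by auto
    define F where "F = (\<lambda>(g, u). gmulw Rl g (inv_word u)) ` (VK \<times> UU)"
    have Ff: "finite F" unfolding F_def using VKf UUf by simp
    define NN where "NN = (\<Union>f\<in>F. {n. fst (s n) = f})"
    have NNf: "finite NN" unfolding NN_def using Ff finite_visits[OF ray pr] by auto
    define nmax where "nmax = Max (insert 0 NN)"
    have claim: "nat \<lfloor>a\<rfloor> \<in> NN \<and> nat \<lfloor>b\<rfloor> \<le> kmax" if ab: "(a, b) \<in> ?P" for a b
    proof -
      define n where "n = nat \<lfloor>a\<rfloor>"
      define k where "k = nat \<lfloor>b\<rfloor>"
      have a0: "0 \<le> a" "0 \<le> b" using ab by (auto simp: Q_def)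
      have "(a - real n, b) \<in> {0..1} \<times> {real k..real k + 1}"
        using a0 unfolding n_def k_def by simp linarith
      then have "H (s n) (a - real n, b) \<in> strip Rl \<phi> (s n) k" using SMi[where n=n and k=k] by blast
      then have inS: "Hs s H (a, b) \<in> strip Rl \<phi> (s n) k" using Hs_eq[OF a0(1)] by (simp add: n_def)
      obtain w where w: "fst (s n) = vcls Rl w" "set w \<subseteq> Some ` \<A> \<times> UNIV" using RW[of n] by blast
      have sn: "s n = (vcls Rl w, snd (s n))" using w(1) by (metis prod.collapse)
      obtain u where u: "u \<in> Uw \<A> \<phi> k" "vert (Hs s H (a, b)) = vcls Rl (w @ u)"
        using strip_vert[OF fin phiA RL[of n], of "Hs s H (a, b)" Rl w k] inS sn by auto
      define g where "g = vert (Hs s H (a, b))"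
      have gV: "g \<in> VK" using ab by (auto simp: VK_def g_def)
      have tw: "tdeg w = 0" by (rule tdeg_noNone'[OF w(2)])
      have "tdegg Rl g = tdeg u" using u(2) tw by (simp add: g_def tdegg_vcls[OF TD])
      moreover have "int k \<le> tdeg u + 4" using u(1) by (simp add: Uw_def)
      moreover have "tdegg Rl g \<le> Max (insert 0 (tdegg Rl ` VK))" using gV VKf by (intro Max_ge) auto
      ultimately have kk: "k \<le> kmax" by (simp add: kmax_def)
      then have "u \<in> UU" using u(1) by (auto simp: UU_def)
      moreover have "gmulw Rl g (inv_word u) = fst (s n)"
        using u(2) w(1) by (simp add: g_def gmulw_vcls vcls_eq_iff peq_cancel_word)
      ultimately have "fst (s n) \<in> F" using gV unfolding F_def by (metis (no_types, lifting) SigmaI case_prod_conv image_eqI)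
      then have "n \<in> NN" by (auto simp: NN_def)
      then show ?thesis using kk by (simp add: n_def k_def)
    qed
    have "?P \<subseteq> {0..real nmax + 1} \<times> {0..real kmax + 1}"
    proof
      fix p assume pP: "p \<in> ?P"
      obtain a b where pab: "p = (a, b)" by (cases p)
      have ab: "(a, b) \<in> ?P" using pP pab by simp
      then have a0: "0 \<le> a" "0 \<le> b" by (auto simp: Q_def)
      have c: "nat \<lfloor>a\<rfloor> \<in> NN" "nat \<lfloor>b\<rfloor> \<le> kmax" using claim[OF ab] by auto
      have "nat \<lfloor>a\<rfloor> \<le> nmax" using c(1) NNf by (auto simp: nmax_def)
      then have "a \<le> real nmax + 1" using a0 by linarith
      moreover have "b \<le> real kmax + 1" using c(2) a0 by linarith
      ultimately show "p \<in> {0..real nmax + 1} \<times> {0..real kmax + 1}" using a0 pab by auto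
    qed
    then have "bounded ?P" by (rule bounded_subset[rotated]) (intro bounded_Times bounded_closed_interval)
    then have "compact ?P" using Pc by (simp add: compact_eq_bounded_closed)
    then show ?thesis by (simp add: compactin_subtopology)
  qed
  have E1: "Hs s H (x, 0) = ray_map Rl s x" if x: "0 \<le> x" for x
  proof -
    define n where "n = nat \<lfloor>x\<rfloor>"
    define x' where "x' = x - real n"
    have x': "0 \<le> x'" "x' < 1" using x by (simp_all add: x'_def n_def) linarith+
    obtain w where w: "fst (s n) = vcls Rl w" using RW[of n] by blast
    have "Hs s H (x, 0) = H (s n) (x', real 0)" using Hs_eq[OF x] by (simp add: n_def x'_def)
    also have "\<dots> = word_path Rl (gmulw Rl (fst (s n)) (tpow 0)) (phi_pow \<phi> 0 [snd (s n)]) x'"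
      using SMb[where x=x' and n=n and k=0] x' by simp
    also have "\<dots> = oe_pt Rl (fst (s n), snd (s n)) x'"
      using x' w by (simp add: word_path_def tpow_def phi_pow_def gmulw_vcls)
    also have "\<dots> = ray_map Rl s x" using x by (simp add: ray_map_def n_def x'_def)
    finally show ?thesis .
  qed
  have E2: "Hs s H (0, y) = ray_map Rl (t_ray Rl v) y" if y: "0 \<le> y" for y
  proof -
    have "Hs s H (0, y) = H (s 0) (0, y)" by (simp add: Hs_def)
    also have "\<dots> = oe_pt Rl (gmulw Rl (fst (s 0)) (tpow (nat \<lfloor>y\<rfloor>)), (None, False)) (y - real (nat \<lfloor>y\<rfloor>))"
      using SMs[where k="nat \<lfloor>y\<rfloor>" and y=y and n=0] yk[OF y] by simp
    also have "\<dots> = ray_map Rl (t_ray Rl v) y" using y by (simp add: ray_map_def t_ray_def v_def)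
    finally show ?thesis .
  qed
  have E3: "Hs s H (0, 0) = Vtx v"
  proof -
    obtain w where w: "fst (s 0) = vcls Rl w" using RW[of 0] by blast
    have "Hs s H (0, 0) = ray_map Rl (t_ray Rl v) 0" by (rule E2) simp
    also have "\<dots> = Vtx v" using w by (simp add: ray_map_def t_ray_def v_def tpow_def gmulw_vcls oe_pt_0)
    finally show ?thesis .
  qed
  show ?thesis
    unfolding Let_def Rl_def[symmetric] X_def[symmetric] v_def[symmetric] Q_def[symmetric]
    using CONT PROP E1 E2 E3 by blast
qed


end
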